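(* Consider the K-AVG algorithm (described in the context) run with stepsizes $\gamma_j>0$ and batch sizes $B_j\ge1$ (for outer iteration $j$) such that, for some constant $0<\delta<1$ and all $j$, $$1\ \ge\ \frac{L^2\gamma_j^2(K+1)(K-2)}{2}+L\gamma_jK\qquad\text{and}\qquad 1-\delta\ \ge\ L^2\gamma_j^2 .$$ Then for every $N\in\mathbb{N}$, $$\mathbb{E}\sum_{j=1}^N\frac{\gamma_j}{\sum_{i=1}^N\gamma_i}\big\|\nabla F(\widetilde w_j)\big\|_2^2\ \le\ \frac{2(F(\widetilde w_1)-F^* )}{(K-1+\delta)\sum_{i=1}^N\gamma_i}+\sum_{j=1}^N\frac{LK\gamma_j^2M}{B_j(K-1+\delta)\sum_{i=1}^N\gamma_i}\Big(\frac KP+\frac{L(2K-1)(K-1)\gamma_j}{6}\Big).$$ In particular, if $$\sum_{j=1}^\infty\gamma_j=\infty,\qquad \sum_{j=1}^\infty\frac{K\gamma_j^2}{PB_j}<\infty,\qquad \sum_{j=1}^\infty\gamma_j^3<\infty,$$ then $\mathbb{E}\sum_{j=1}^N\frac{\gamma_j}{\sum_{i=1}^N\gamma_i}\|\nabla F(\widetilde w_j)\|_2^2\to0$ as $N\to\infty$.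
   Context: Let $F:\mathbb{R}^d\to\mathbb{R}$ be continuously differentiable with $L$-Lipschitz gradient ($L>0$): $\|\nabla F(w)-\nabla F(w')\|_2\le L\|w-w'\|_2$ for all $w,w'$. Let $\xi$ be a random variable and $(w,\xi)\mapsto\nabla F(w;\xi)\in\mathbb{R}^d$ a stochastic gradient satisfying, for every fixed $w$, $\mathbb{E}_\xi\nabla F(w;\xi)=\nabla F(w)$ and $\mathbb{E}_\xi\|\nabla F(w;\xi)\|_2^2-\|\mathbb{E}_\xi\nabla F(w;\xi)\|_2^2\le M$ for a constant $M\ge0$. K-AVG algorithm with $P\ge1$ processors, delay $K\ge1$, stepsizes $\gamma_n>0$ and batch sizes $B_n\ge1$: start from a deterministic $\widetilde w_1\in\mathbb{R}^d$. For $n=1,2,\dots$: each processor $j=1,\dots,P$ sets $w^j_{n,0}=\widetilde w_n$ and for $k=1,\dots,K$ updates $w^j_{n,k}=w^j_{n,k-1}-\frac{\gamma_n}{B_n}\sum_{s=1}^{B_n}\nabla F(w^j_{n,k-1};\xi^j_{n,k,s})$; then $\widetilde w_{n+1}=\frac1P\sum_{j=1}^P w^j_{n,K}$. All samples $\xi^j_{n,k,s}$ (over all $n,j,k,s$) are i.i.d. copies of $\xi$. It is assumed that there is a scalar $F^*$ with $F\ge F^*$ on an open set containing all iterates (in particular $F(\widetilde w_n)\ge F^*$ for all $n$). $\mathbb{E}$ denotes total expectation over all samples. *)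

theory Defs
  imports "HOL-Probability.Probability"
begin

text \<open>Sample index (n, j, k, s): outer iteration n, processor j, local step k,
  minibatch element s. A sample path is a map from indices to sample values.\<close>

type_synonym sidx = "nat \<times> nat \<times> nat \<times> nat"

primrec kavg_local ::
  "('a::euclidean_space \<Rightarrow> 'x \<Rightarrow> 'a) \<Rightarrow> (nat \<Rightarrow> real) \<Rightarrow> (nat \<Rightarrow> nat)
   \<Rightarrow> (sidx \<Rightarrow> 'x) \<Rightarrow> nat \<Rightarrow> nat \<Rightarrow> 'a \<Rightarrow> nat \<Rightarrow> 'a" where
  "kavg_local G \<gamma> B \<omega> n j w 0 = w"
| "kavg_local G \<gamma> B \<omega> n j w (Suc k) =
     kavg_local G \<gamma> B \<omega> n j w k
     - (\<gamma> n / real (B n)) *\<^sub>R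
         (\<Sum>s=1..B n. G (kavg_local G \<gamma> B \<omega> n j w k) (\<omega> (n, j, Suc k, s)))"

text \<open>kavg_seq m is the averaged iterate w~_{m+1}.\<close>
primrec kavg_seq ::
  "('a::euclidean_space \<Rightarrow> 'x \<Rightarrow> 'a) \<Rightarrow> nat \<Rightarrow> nat \<Rightarrow> (nat \<Rightarrow> real) \<Rightarrow> (nat \<Rightarrow> nat)
   \<Rightarrow> 'a \<Rightarrow> (sidx \<Rightarrow> 'x) \<Rightarrow> nat \<Rightarrow> 'a" where
  "kavg_seq G P K \<gamma> B w1 \<omega> 0 = w1"
| "kavg_seq G P K \<gamma> B w1 \<omega> (Suc m) =
     (1 / real P) *\<^sub>R
       (\<Sum>j=1..P. kavg_local G \<gamma> B \<omega> (Suc m) j (kavg_seq G P K \<gamma> B w1 \<omega> m) K)"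

definition kavg_w ::
  "('a::euclidean_space \<Rightarrow> 'x \<Rightarrow> 'a) \<Rightarrow> nat \<Rightarrow> nat \<Rightarrow> (nat \<Rightarrow> real) \<Rightarrow> (nat \<Rightarrow> nat)
   \<Rightarrow> 'a \<Rightarrow> (sidx \<Rightarrow> 'x) \<Rightarrow> nat \<Rightarrow> 'a" where
  "kavg_w G P K \<gamma> B w1 \<omega> n = kavg_seq G P K \<gamma> B w1 \<omega> (n - 1)"

end

theory Submission
  imports Defs
begin

definition mix :: "'i set \<Rightarrow> ('i \<Rightarrow> 'x) \<Rightarrow> ('i \<Rightarrow> 'x) \<Rightarrow> 'i \<Rightarrow> 'x" where
  "mix A \<omega> \<omega>' = (\<lambda>i. if i \<in> A then \<omega> i else \<omega>' i)"

lemma measurable_mix[measurable]: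
  fixes A :: "'i set" and D :: "'x measure"
  shows "(\<lambda>(\<omega>,\<omega>'). mix A \<omega> \<omega>') \<in> measurable (PiM UNIV (\<lambda>_. D) \<Otimes>\<^sub>M PiM UNIV (\<lambda>_. D)) (PiM UNIV (\<lambda>_. D))"
proof (rule measurable_PiM_single')
  fix i :: 'i
  show "(\<lambda>\<omega>. (case \<omega> of (\<omega>, \<omega>') \<Rightarrow> mix A \<omega> \<omega>') i) \<in> PiM UNIV (\<lambda>_. D) \<Otimes>\<^sub>M PiM UNIV (\<lambda>_. D) \<rightarrow>\<^sub>M D"
  proof (cases "i \<in> A")
    case True
    then have eq: "(\<lambda>\<omega>. (case \<omega> of (\<omega>, \<omega>') \<Rightarrow> mix A \<omega> \<omega>') i) = (\<lambda>\<omega>. fst \<omega> i)"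
      by (auto simp: mix_def split: prod.splits)
    show ?thesis unfolding eq by measurable
  next
    case False
    then have eq: "(\<lambda>\<omega>. (case \<omega> of (\<omega>, \<omega>') \<Rightarrow> mix A \<omega> \<omega>') i) = (\<lambda>\<omega>. snd \<omega> i)"
      by (auto simp: mix_def split: prod.splits)
    show ?thesis unfolding eq by measurable
  qed
qed (auto simp: space_pair_measure space_PiM mix_def PiE_iff)

lemma space_PiM_UNIV: "space (PiM UNIV (\<lambda>_. D)) = UNIV \<rightarrow> space D"
  by (simp add: space_PiM PiE_def)

lemma distr_mix:
  fixes A :: "'i set" and D :: "'x measure"
  assumes D: "prob_space D"
  shows "distr (PiM UNIV (\<lambda>_. D) \<Otimes>\<^sub>M PiM UNIV (\<lambda>_. D)) (PiM UNIV (\<lambda>_. D)) (\<lambda>(\<omega>,\<omega>'). mix A \<omega> \<omega>')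
     = PiM UNIV (\<lambda>_. D)" (is "?L = ?O")
proof (rule measure_eqI_PiM_infinite[symmetric, OF refl])
  interpret O: prob_space ?O using D by (intro prob_space_PiM) auto
  show "finite_measure ?O" by unfold_locales
  show "sets ?L = sets ?O" by simp
  fix J :: "'i set" and X assume J: "finite J" "J \<subseteq> UNIV" and X: "\<And>i. i \<in> J \<Longrightarrow> X i \<in> sets D"
  let ?C = "\<lambda>J. prod_emb UNIV (\<lambda>_. D) J (Pi\<^sub>E J X)"
  have cyl: "?O (?C J') = (\<Prod>i\<in>J'. emeasure D (X i))" if "J' \<subseteq> J" for J'
    using D J X that finite_subset[OF that] by (intro emeasure_PiM_emb) auto
  have pre: "(\<lambda>(\<omega>,\<omega>'). mix A \<omega> \<omega>') -` ?C J \<inter> space (?O \<Otimes>\<^sub>M ?O) = ?C (J \<inter> A) \<times> ?C (J - A)"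
    by (auto simp: prod_emb_def space_pair_measure space_PiM_UNIV mix_def PiE_iff split: if_splits)
  have "?L (?C J) = (?O \<Otimes>\<^sub>M ?O) (?C (J \<inter> A) \<times> ?C (J - A))"
    using J X by (subst emeasure_distr) (auto simp: pre intro!: sets_PiM_I)
  also have "\<dots> = ?O (?C (J \<inter> A)) * ?O (?C (J - A))"
    using J X by (intro O.emeasure_pair_measure_Times sets_PiM_I) auto
  also have "\<dots> = (\<Prod>i\<in>J. emeasure D (X i))"
  proof -
    have "J = (J \<inter> A) \<union> (J - A)" by auto
    then have "(\<Prod>i\<in>J. emeasure D (X i)) = (\<Prod>i\<in>J \<inter> A. emeasure D (X i)) * (\<Prod>i\<in>J - A. emeasure D (X i))"
      using J by (metis Diff_disjoint finite_Diff finite_Int inf_assoc prod.union_disjoint inf_sup_aci(1) Int_Diff_disjoint)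
    then show ?thesis by (simp add: cyl)
  qed
  finally show "?O (?C J) = ?L (?C J)" using cyl[of J] by simp
qed

definition dep :: "'i set \<Rightarrow> (('i \<Rightarrow> 'x) \<Rightarrow> 'b) \<Rightarrow> bool" where
  "dep A f \<longleftrightarrow> (\<forall>\<omega> \<omega>'. (\<forall>i\<in>A. \<omega> i = \<omega>' i) \<longrightarrow> f \<omega> = f \<omega>')"

lemma dep_mix1: "dep A f \<Longrightarrow> f (mix A \<omega> \<omega>') = f \<omega>"
  unfolding dep_def by (erule allE[of _ "mix A \<omega> \<omega>'"], erule allE[of _ \<omega>], erule mp) (simp add: mix_def)

lemma dep_mix2: "dep (- A) f \<Longrightarrow> f (mix A \<omega> \<omega>') = f \<omega>'"
  unfolding dep_def by (erule allE[of _ "mix A \<omega> \<omega>'"], erule allE[of _ \<omega>'], erule mp) (simp add: mix_def)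

lemma dep_comp: "dep A f \<Longrightarrow> dep A (\<lambda>\<omega>. h (f \<omega>))"
  unfolding dep_def
  apply (intro allI impI)
  apply (drule spec, drule spec, drule mp, assumption)
  by simp

lemma dep_mono: "dep A f \<Longrightarrow> A \<subseteq> B \<Longrightarrow> dep B f"
  unfolding dep_def by blast

locale omsp =
  fixes D :: "'x measure"
  assumes D: "prob_space D"
begin

abbreviation \<Omega> :: "(sidx \<Rightarrow> 'x) measure" where "\<Omega> \<equiv> PiM UNIV (\<lambda>_. D)"

lemma prob_\<Omega>: "prob_space \<Omega>"
  using D by (intro prob_space_PiM) auto

interpretation O: prob_space \<Omega> by (rule prob_\<Omega>)
interpretation OO: pair_sigma_finite \<Omega> \<Omega> by unfold_locales

lemma nn_integral_mix:
  fixes A :: "sidx set"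
  assumes f[measurable]: "f \<in> borel_measurable \<Omega>"
  shows "(\<integral>\<^sup>+\<omega>. f \<omega> \<partial>\<Omega>) = (\<integral>\<^sup>+\<omega>. \<integral>\<^sup>+\<omega>'. f (mix A \<omega> \<omega>') \<partial>\<Omega> \<partial>\<Omega>)"
proof -
  have "(\<integral>\<^sup>+\<omega>. f \<omega> \<partial>\<Omega>) = (\<integral>\<^sup>+\<omega>. f \<omega> \<partial>distr (\<Omega> \<Otimes>\<^sub>M \<Omega>) \<Omega> (\<lambda>(\<omega>,\<omega>'). mix A \<omega> \<omega>'))"
    using distr_mix[OF D, of A] by simp
  also have "\<dots> = (\<integral>\<^sup>+p. f (case p of (\<omega>,\<omega>') \<Rightarrow> mix A \<omega> \<omega>') \<partial>(\<Omega> \<Otimes>\<^sub>M \<Omega>))"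
    by (rule nn_integral_distr) measurable
  also have "\<dots> = (\<integral>\<^sup>+\<omega>. \<integral>\<^sup>+\<omega>'. f (mix A \<omega> \<omega>') \<partial>\<Omega> \<partial>\<Omega>)"
    using O.nn_integral_fst[of "\<lambda>p. f (case p of (\<omega>,\<omega>') \<Rightarrow> mix A \<omega> \<omega>')" \<Omega>] by simp
  finally show ?thesis .
qed

lemma integral_mix:
  fixes A :: "sidx set" and f :: "_ \<Rightarrow> 'b::{banach, second_countable_topology}"
  assumes f: "integrable \<Omega> f"
  shows "integrable (\<Omega> \<Otimes>\<^sub>M \<Omega>) (\<lambda>(\<omega>,\<omega>'). f (mix A \<omega> \<omega>'))"
    and "(\<integral>\<omega>. f \<omega> \<partial>\<Omega>) = (\<integral>\<omega>. \<integral>\<omega>'. f (mix A \<omega> \<omega>') \<partial>\<Omega> \<partial>\<Omega>)"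
proof -
  have fm[measurable]: "f \<in> borel_measurable \<Omega>" using f by auto
  have d: "distr (\<Omega> \<Otimes>\<^sub>M \<Omega>) \<Omega> (\<lambda>(\<omega>,\<omega>'). mix A \<omega> \<omega>') = \<Omega>"
    using distr_mix[OF D, of A] by simp
  have i: "integrable (\<Omega> \<Otimes>\<^sub>M \<Omega>) (\<lambda>p. f (case p of (\<omega>,\<omega>') \<Rightarrow> mix A \<omega> \<omega>'))"
    using integrable_distr_eq[of "\<lambda>(\<omega>,\<omega>'). mix A \<omega> \<omega>'" "\<Omega> \<Otimes>\<^sub>M \<Omega>" \<Omega> f] f d by simp
  then show "integrable (\<Omega> \<Otimes>\<^sub>M \<Omega>) (\<lambda>(\<omega>,\<omega>'). f (mix A \<omega> \<omega>'))"
    by (simp add: case_prod_beta')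
  have "(\<integral>\<omega>. f \<omega> \<partial>\<Omega>) = (\<integral>\<omega>. f \<omega> \<partial>distr (\<Omega> \<Otimes>\<^sub>M \<Omega>) \<Omega> (\<lambda>(\<omega>,\<omega>'). mix A \<omega> \<omega>'))"
    by (simp add: d)
  also have "\<dots> = (\<integral>p. f (case p of (\<omega>,\<omega>') \<Rightarrow> mix A \<omega> \<omega>') \<partial>(\<Omega> \<Otimes>\<^sub>M \<Omega>))"
    by (rule integral_distr[of "\<lambda>(\<omega>,\<omega>'). mix A \<omega> \<omega>'" "\<Omega> \<Otimes>\<^sub>M \<Omega>" \<Omega> f, simplified])
  also have "\<dots> = (\<integral>\<omega>. \<integral>\<omega>'. f (mix A \<omega> \<omega>') \<partial>\<Omega> \<partial>\<Omega>)"
    using OO.integral_fst'[OF i] by simp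
  finally show "(\<integral>\<omega>. f \<omega> \<partial>\<Omega>) = (\<integral>\<omega>. \<integral>\<omega>'. f (mix A \<omega> \<omega>') \<partial>\<Omega> \<partial>\<Omega>)" .
qed

lemma cond_nn:
  fixes A :: "sidx set" and u :: "_ \<Rightarrow> 'a"
  assumes m: "(\<lambda>\<omega>. \<psi> (u \<omega>) \<omega>) \<in> borel_measurable \<Omega>"
    and du: "dep A u" and d\<psi>: "\<And>v. dep (- A) (\<psi> v)"
  shows "(\<integral>\<^sup>+\<omega>. \<psi> (u \<omega>) \<omega> \<partial>\<Omega>) = (\<integral>\<^sup>+\<omega>. \<integral>\<^sup>+\<omega>'. \<psi> (u \<omega>) \<omega>' \<partial>\<Omega> \<partial>\<Omega>)"
  using nn_integral_mix[OF m, of A] by (simp add: dep_mix1[OF du] dep_mix2[OF d\<psi>])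

lemma cond_int:
  fixes A :: "sidx set" and u :: "_ \<Rightarrow> 'a" and \<psi> :: "'a \<Rightarrow> _ \<Rightarrow> 'b::{banach, second_countable_topology}"
  assumes m: "integrable \<Omega> (\<lambda>\<omega>. \<psi> (u \<omega>) \<omega>)"
    and du: "dep A u" and d\<psi>: "\<And>v. dep (- A) (\<psi> v)"
  shows "(\<integral>\<omega>. \<psi> (u \<omega>) \<omega> \<partial>\<Omega>) = (\<integral>\<omega>. \<integral>\<omega>'. \<psi> (u \<omega>) \<omega>' \<partial>\<Omega> \<partial>\<Omega>)"
  using integral_mix(2)[OF m, of A] by (simp add: dep_mix1[OF du] dep_mix2[OF d\<psi>])

lemma indep_inner:
  fixes A :: "sidx set" and f g :: "_ \<Rightarrow> 'a::euclidean_space"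
  assumes f: "integrable \<Omega> f" and g: "integrable \<Omega> g"
    and df: "dep A f" and dg: "dep (- A) g"
  shows "integrable \<Omega> (\<lambda>\<omega>. f \<omega> \<bullet> g \<omega>)" and "(\<integral>\<omega>. f \<omega> \<bullet> g \<omega> \<partial>\<Omega>) = integral\<^sup>L \<Omega> f \<bullet> integral\<^sup>L \<Omega> g"
proof -
  have [measurable]: "f \<in> borel_measurable \<Omega>" "g \<in> borel_measurable \<Omega>" using f g by auto
  have "(\<integral>\<^sup>+\<omega>. norm (f \<omega> \<bullet> g \<omega>) \<partial>\<Omega>) \<le> (\<integral>\<^sup>+\<omega>. ennreal (norm (f \<omega>)) * ennreal (norm (g \<omega>)) \<partial>\<Omega>)"
    by (intro nn_integral_mono) (simp add: ennreal_mult[symmetric] Cauchy_Schwarz_ineq2)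
  also have "\<dots> = (\<integral>\<^sup>+\<omega>. \<integral>\<^sup>+\<omega>'. ennreal (norm (f \<omega>)) * ennreal (norm (g \<omega>')) \<partial>\<Omega> \<partial>\<Omega>)"
    by (rule cond_nn[where u=f and \<psi>="\<lambda>v \<omega>. ennreal (norm v) * ennreal (norm (g \<omega>))" and A=A, OF _ df])
      (auto intro: dep_comp[OF dg])
  also have "\<dots> = (\<integral>\<^sup>+\<omega>. ennreal (norm (f \<omega>)) * (\<integral>\<^sup>+\<omega>'. ennreal (norm (g \<omega>')) \<partial>\<Omega>) \<partial>\<Omega>)"
    by (simp add: nn_integral_cmult)
  also have "\<dots> = (\<integral>\<^sup>+\<omega>. ennreal (norm (f \<omega>)) \<partial>\<Omega>) * (\<integral>\<^sup>+\<omega>'. ennreal (norm (g \<omega>')) \<partial>\<Omega>)"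
    by (simp add: nn_integral_multc)
  also have "\<dots> < \<infinity>"
    using f g unfolding integrable_iff_bounded by (simp add: ennreal_mult_less_top)
  finally show i: "integrable \<Omega> (\<lambda>\<omega>. f \<omega> \<bullet> g \<omega>)"
    by (simp add: integrable_iff_bounded)
  have "(\<integral>\<omega>. f \<omega> \<bullet> g \<omega> \<partial>\<Omega>) = (\<integral>\<omega>. \<integral>\<omega>'. f \<omega> \<bullet> g \<omega>' \<partial>\<Omega> \<partial>\<Omega>)"
    by (rule cond_int[where u=f and \<psi>="\<lambda>v \<omega>. v \<bullet> g \<omega>" and A=A, OF i df])
      (auto intro: dep_comp[OF dg])
  also have "\<dots> = (\<integral>\<omega>. f \<omega> \<bullet> integral\<^sup>L \<Omega> g \<partial>\<Omega>)"
    by (rule Bochner_Integration.integral_cong[OF refl]) (rule integral_inner_right, rule g)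
  also have "\<dots> = integral\<^sup>L \<Omega> f \<bullet> integral\<^sup>L \<Omega> g"
    by (rule integral_inner_left, rule f)
  finally show "(\<integral>\<omega>. f \<omega> \<bullet> g \<omega> \<partial>\<Omega>) = integral\<^sup>L \<Omega> f \<bullet> integral\<^sup>L \<Omega> g" .
qed

end

lemma descent_upper:
  fixes F :: "'a::euclidean_space \<Rightarrow> real"
  assumes grad: "\<And>w. GDERIV F w :> gradF w"
    and lip: "\<And>w w'. norm (gradF w - gradF w') \<le> L * norm (w - w')"
  shows "F y \<le> F x + gradF x \<bullet> (y - x) + L / 2 * (norm (y - x))\<^sup>2"
proof -
  define d where "d = y - x"
  define \<phi> where "\<phi> t = F (x + t *\<^sub>R d) - t * (gradF x \<bullet> d) - L / 2 * t\<^sup>2 * (norm d)\<^sup>2" for t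
  have der: "(\<phi> has_real_derivative (gradF (x + t *\<^sub>R d) \<bullet> d - gradF x \<bullet> d - L * t * (norm d)\<^sup>2)) (at t)" for t
  proof -
    have h1: "((\<lambda>t. x + t *\<^sub>R d) has_derivative (\<lambda>h. h *\<^sub>R d)) (at t)"
      by (auto intro!: derivative_eq_intros)
    have h2: "(F has_derivative (\<lambda>h. h \<bullet> gradF (x + t *\<^sub>R d))) (at (x + t *\<^sub>R d))"
      using grad[of "x + t *\<^sub>R d"] by (simp add: gderiv_def)
    have "((\<lambda>t. F (x + t *\<^sub>R d)) has_derivative (\<lambda>h. (h *\<^sub>R d) \<bullet> gradF (x + t *\<^sub>R d))) (at t)"
      using has_derivative_compose[OF h1 h2] by (simp add: o_def)
    then have "((\<lambda>t. F (x + t *\<^sub>R d)) has_real_derivative (gradF (x + t *\<^sub>R d) \<bullet> d)) (at t)"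
      by (simp add: has_field_derivative_def inner_commute mult.commute[of _ "d \<bullet> _"])
    then show ?thesis unfolding \<phi>_def
      by (auto intro!: derivative_eq_intros simp: power2_eq_square)
  qed
  have "\<phi> 1 \<le> \<phi> 0"
  proof (rule DERIV_nonpos_imp_nonincreasing[of 0 1 \<phi>])
    fix t :: real assume t: "0 \<le> t" "t \<le> 1"
    have "gradF (x + t *\<^sub>R d) \<bullet> d - gradF x \<bullet> d = (gradF (x + t *\<^sub>R d) - gradF x) \<bullet> d"
      by (simp add: inner_diff_left)
    also have "\<dots> \<le> norm (gradF (x + t *\<^sub>R d) - gradF x) * norm d"
      by (rule Cauchy_Schwarz_ineq2[THEN abs_le_D1])
    also have "\<dots> \<le> L * norm (t *\<^sub>R d) * norm d"
      using lip[of "x + t *\<^sub>R d" x] by (intro mult_right_mono) auto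
    also have "\<dots> = L * t * (norm d)\<^sup>2"
      using t by (simp add: power2_eq_square)
    finally show "\<exists>y. (\<phi> has_real_derivative y) (at t) \<and> y \<le> 0"
      using der[of t] by auto
  qed simp
  then show ?thesis unfolding \<phi>_def d_def by simp
qed

lemma descent_lower:
  fixes F :: "'a::euclidean_space \<Rightarrow> real"
  assumes grad: "\<And>w. GDERIV F w :> gradF w"
    and lip: "\<And>w w'. norm (gradF w - gradF w') \<le> L * norm (w - w')"
  shows "F y \<ge> F x + gradF x \<bullet> (y - x) - L / 2 * (norm (y - x))\<^sup>2"
proof -
  have g: "GDERIV (\<lambda>w. - F w) w :> - gradF w" for w
    using grad[of w] unfolding gderiv_def by (auto intro!: derivative_eq_intros)
  have l: "norm (- gradF w - - gradF w') \<le> L * norm (w - w')" for w w'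
    using lip[of w w'] by (simp add: norm_minus_commute[of "gradF w"] )
  show ?thesis using descent_upper[of "\<lambda>w. - F w" "\<lambda>w. - gradF w" L y x, OF g l] by simp
qed

lemma norm_sum_sq_le:
  fixes x :: "'i \<Rightarrow> 'a::real_normed_vector"
  shows "(norm (\<Sum>i\<in>I. x i))\<^sup>2 \<le> real (card I) * (\<Sum>i\<in>I. (norm (x i))\<^sup>2)"
proof -
  have "norm (\<Sum>i\<in>I. x i) \<le> (\<Sum>i\<in>I. 1 * norm (x i))" using norm_sum by simp
  then have "(norm (\<Sum>i\<in>I. x i))\<^sup>2 \<le> (\<Sum>i\<in>I. 1 * norm (x i))\<^sup>2"
    by (intro power_mono) auto
  also have "\<dots> \<le> (\<Sum>i\<in>I. 1\<^sup>2) * (\<Sum>i\<in>I. (norm (x i))\<^sup>2)"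
    by (rule Cauchy_Schwarz_ineq_sum)
  finally show ?thesis by simp
qed

lemma gauss_sum: "(\<Sum>k=1..n. real k - 1) = real n * (real n - 1) / 2"
  by (induction n) (auto simp: algebra_simps)

lemma sq_sum: "(\<Sum>k=1..n. (real k - 1)\<^sup>2) = (real n - 1) * real n * (2 * real n - 1) / 6"
  by (induction n) (auto simp: algebra_simps power2_eq_square)

lemma swap_sum:
  fixes H :: "nat \<Rightarrow> real"
  shows "(\<Sum>k=1..K. (real k - 1) * (\<Sum>i\<in>{1..<k}. H i)) = (\<Sum>i=1..K. H i * (\<Sum>k\<in>{i<..K}. real k - 1))"
proof -
  have "(\<Sum>k=1..K. (real k - 1) * (\<Sum>i\<in>{1..<k}. H i)) = (\<Sum>k\<in>{1..K}. \<Sum>i\<in>{i\<in>{1..K}. i < k}. (real k - 1) * H i)"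
    by (intro sum.cong refl) (auto simp: sum_distrib_left intro!: sum.cong)
  also have "\<dots> = (\<Sum>i\<in>{1..K}. \<Sum>k\<in>{k\<in>{1..K}. i < k}. (real k - 1) * H i)"
    by (rule sum.swap_restrict) auto
  also have "\<dots> = (\<Sum>i=1..K. H i * (\<Sum>k\<in>{i<..K}. real k - 1))"
    by (intro sum.cong refl) (auto simp: sum_distrib_left mult.commute intro!: sum.cong)
  finally show ?thesis .
qed

lemma c_eq:
  assumes "i \<le> K"
  shows "(\<Sum>k\<in>{i<..K}. real k - 1) = real K * (real K - 1) / 2 - real i * (real i - 1) / 2"
proof -
  have "{1..K} = {1..i} \<union> {i<..K}" using assms by auto
  then have "(\<Sum>k=1..K. real k - 1) = (\<Sum>k=1..i. real k - 1) + (\<Sum>k\<in>{i<..K}. real k - 1)"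
    by (simp add: sum.union_disjoint[symmetric] ivl_disj_int)
  then show ?thesis using gauss_sum[of K] gauss_sum[of i] by linarith
qed

lemma alg_main:
  fixes H S E :: "nat \<Rightarrow> real" and L \<gamma> \<delta> m a2 X2 EX2 :: real and K P :: nat
  assumes K: "K \<ge> 1" and P: "P \<ge> 1" and L: "L > 0" and \<gamma>: "\<gamma> > 0" and m: "m \<ge> 0"
    and step1: "1 \<ge> L\<^sup>2 * \<gamma>\<^sup>2 * (real K + 1) * (real K - 2) / 2 + L * \<gamma> * real K"
    and step2: "1 - \<delta> \<ge> L\<^sup>2 * \<gamma>\<^sup>2"
    and H1: "H 1 = a2" and Hnn: "\<And>k. H k \<ge> 0"
    and S: "\<And>k. k \<in> {1..K} \<Longrightarrow> S k \<le> H k + m"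
    and E: "\<And>k. k \<in> {1..K} \<Longrightarrow> E k \<ge> (a2 + H k - L\<^sup>2 * \<gamma>\<^sup>2 * ((real k - 1) * (\<Sum>i\<in>{1..<k}. S i))) / 2"
    and X2: "X2 \<le> real K * (\<Sum>k=1..K. S k)"
    and EX2: "EX2 \<le> real K * (\<Sum>k=1..K. H k)"
  shows "- \<gamma> * (\<Sum>k=1..K. E k) + L * \<gamma>\<^sup>2 / (2 * real P) * (X2 + (real P - 1) * EX2)
     \<le> - \<gamma> * (real K - 1 + \<delta>) / 2 * a2 + L * \<gamma>\<^sup>2 * (real K)\<^sup>2 * m / (2 * real P)
        + L\<^sup>2 * \<gamma>^3 * m * (real K - 1) * real K * (2 * real K - 1) / 12"
proof -
  define c where "c i = (\<Sum>k\<in>{i<..K}. real k - 1)" for i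
  define SH where "SH = (\<Sum>k=1..K. H k)"
  define SS where "SS = (\<Sum>k=1..K. S k)"
  define T where "T = (\<Sum>k=1..K. (real k - 1) * (\<Sum>i\<in>{1..<k}. S i))"
  define TH where "TH = (\<Sum>i=1..K. H i * c i)"
  define Q2 where "Q2 = (\<Sum>k=1..K. (real k - 1)\<^sup>2)"
  have a2: "a2 \<ge> 0" using Hnn[of 1] H1 by simp
  have sumE: "(\<Sum>k=1..K. E k) \<ge> (real K * a2 + SH - L\<^sup>2 * \<gamma>\<^sup>2 * T) / 2"
  proof -
    have "(\<Sum>k=1..K. E k) \<ge> (\<Sum>k=1..K. (a2 + H k - L\<^sup>2 * \<gamma>\<^sup>2 * ((real k - 1) * (\<Sum>i\<in>{1..<k}. S i))) / 2)"
      by (intro sum_mono E) auto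
    also have "(\<Sum>k=1..K. (a2 + H k - L\<^sup>2 * \<gamma>\<^sup>2 * ((real k - 1) * (\<Sum>i\<in>{1..<k}. S i))) / 2)
        = (real K * a2 + SH - L\<^sup>2 * \<gamma>\<^sup>2 * T) / 2"
      unfolding SH_def T_def
      by (simp add: sum_divide_distrib[symmetric] sum.distrib sum_subtractf sum_distrib_left[symmetric])
    finally show ?thesis .
  qed
  have T_le: "T \<le> TH + m * Q2"
  proof -
    have "T \<le> (\<Sum>k=1..K. (real k - 1) * (\<Sum>i\<in>{1..<k}. H i + m))"
      unfolding T_def
      apply (rule sum_mono)
      apply (rule mult_left_mono)
       apply (rule sum_mono)
       apply (rule S)
      by auto
    also have "\<dots> = (\<Sum>k=1..K. (real k - 1) * (\<Sum>i\<in>{1..<k}. H i)) + m * Q2"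
    proof -
      have eq: "(real k - 1) * (\<Sum>i\<in>{1..<k}. H i + m) = (real k - 1) * (\<Sum>i\<in>{1..<k}. H i) + m * (real k - 1)\<^sup>2" if "k \<ge> 1" for k
      proof -
        have e: "(\<Sum>i\<in>{1..<k}. H i + m) = (\<Sum>i\<in>{1..<k}. H i) + m * (real k - 1)"
          using that by (simp add: sum.distrib of_nat_diff)
        show ?thesis by (simp only: e) (simp add: power2_eq_square algebra_simps)
      qed
      have "(\<Sum>k=1..K. (real k - 1) * (\<Sum>i\<in>{1..<k}. H i + m))
          = (\<Sum>k=1..K. (real k - 1) * (\<Sum>i\<in>{1..<k}. H i) + m * (real k - 1)\<^sup>2)"
        by (rule sum.cong[OF refl], rule eq) auto
      then show ?thesis by (simp add: sum.distrib Q2_def sum_distrib_left)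
    qed
    also have "(\<Sum>k=1..K. (real k - 1) * (\<Sum>i\<in>{1..<k}. H i)) = TH"
      unfolding TH_def c_def by (rule swap_sum)
    finally show ?thesis .
  qed
  have SS_le: "SS \<le> SH + real K * m"
  proof -
    have "SS \<le> (\<Sum>k=1..K. H k + m)" unfolding SS_def by (intro sum_mono S) auto
    then show ?thesis by (simp add: sum.distrib SH_def)
  qed
  have coeff: "1 - L * \<gamma> * real K - L\<^sup>2 * \<gamma>\<^sup>2 * c i \<ge> 0" if i: "i \<in> {2..K}" for i
  proof -
    have "c i = real K * (real K - 1) / 2 - real i * (real i - 1) / 2"
      unfolding c_def using i by (intro c_eq) auto
    moreover have "real i * (real i - 1) \<ge> 2"
    proof -
      have "real i \<ge> 2" using i by auto
      then have "real i * (real i - 1) \<ge> 2 * 1" by (intro mult_mono) auto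
      then show ?thesis by simp
    qed
    ultimately have "c i \<le> real K * (real K - 1) / 2 - 1" by simp
    moreover have "real K * (real K - 1) / 2 - 1 = (real K + 1) * (real K - 2) / 2"
      by (simp add: field_simps)
    ultimately have "c i \<le> (real K + 1) * (real K - 2) / 2" by simp
    then have "L\<^sup>2 * \<gamma>\<^sup>2 * c i \<le> L\<^sup>2 * \<gamma>\<^sup>2 * ((real K + 1) * (real K - 2) / 2)"
      by (intro mult_left_mono) auto
    moreover have "L\<^sup>2 * \<gamma>\<^sup>2 * ((real K + 1) * (real K - 2) / 2) = L\<^sup>2 * \<gamma>\<^sup>2 * (real K + 1) * (real K - 2) / 2"
      by simp
    ultimately show ?thesis using step1 by linarith
  qed
  have c1: "c 1 = real K * (real K - 1) / 2"
    unfolding c_def using K by (subst c_eq) auto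
  have Q: "SH - L * \<gamma> * real K * SH - L\<^sup>2 * \<gamma>\<^sup>2 * TH \<ge> a2 * (1 - L * \<gamma> * real K - L\<^sup>2 * \<gamma>\<^sup>2 * (real K * (real K - 1) / 2))"
  proof -
    have "SH - L * \<gamma> * real K * SH - L\<^sup>2 * \<gamma>\<^sup>2 * TH = (\<Sum>i=1..K. H i * (1 - L * \<gamma> * real K - L\<^sup>2 * \<gamma>\<^sup>2 * c i))"
      unfolding SH_def TH_def
      by (simp add: algebra_simps sum_subtractf sum_distrib_left sum_distrib_right sum.distrib)
    also have "\<dots> = H 1 * (1 - L * \<gamma> * real K - L\<^sup>2 * \<gamma>\<^sup>2 * c 1) + (\<Sum>i=2..K. H i * (1 - L * \<gamma> * real K - L\<^sup>2 * \<gamma>\<^sup>2 * c i))"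
    proof -
      have "{1..K} = insert 1 {2..K}" using K by auto
      then show ?thesis by simp
    qed
    also have "\<dots> \<ge> H 1 * (1 - L * \<gamma> * real K - L\<^sup>2 * \<gamma>\<^sup>2 * c 1)"
      using coeff Hnn by (auto intro!: sum_nonneg)
    finally show ?thesis unfolding H1 c1 .
  qed
  have six: "1 - L * \<gamma> * real K - L\<^sup>2 * \<gamma>\<^sup>2 * (real K * (real K - 1) / 2) \<ge> \<delta> - 1"
  proof -
    have "real K * (real K - 1) / 2 = (real K + 1) * (real K - 2) / 2 + 1" by (simp add: field_simps)
    then have "L\<^sup>2 * \<gamma>\<^sup>2 * (real K * (real K - 1) / 2) = L\<^sup>2 * \<gamma>\<^sup>2 * (real K + 1) * (real K - 2) / 2 + L\<^sup>2 * \<gamma>\<^sup>2"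
      by (simp add: algebra_simps)
    then show ?thesis using step1 step2 by linarith
  qed
  have part1: "- \<gamma> * (\<Sum>k=1..K. E k) \<le> - \<gamma> / 2 * (real K * a2 + SH - L\<^sup>2 * \<gamma>\<^sup>2 * TH - L\<^sup>2 * \<gamma>\<^sup>2 * m * Q2)"
  proof -
    have "L\<^sup>2 * \<gamma>\<^sup>2 * T \<le> L\<^sup>2 * \<gamma>\<^sup>2 * (TH + m * Q2)" using T_le by (intro mult_left_mono) auto
    then have "(\<Sum>k=1..K. E k) \<ge> (real K * a2 + SH - L\<^sup>2 * \<gamma>\<^sup>2 * TH - L\<^sup>2 * \<gamma>\<^sup>2 * m * Q2) / 2"
      using sumE by (simp add: algebra_simps)
    then have "\<gamma> * (\<Sum>k=1..K. E k) \<ge> \<gamma> * ((real K * a2 + SH - L\<^sup>2 * \<gamma>\<^sup>2 * TH - L\<^sup>2 * \<gamma>\<^sup>2 * m * Q2) / 2)"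
      using \<gamma> by (intro mult_left_mono) auto
    then show ?thesis by simp
  qed
  have part2: "L * \<gamma>\<^sup>2 / (2 * real P) * (X2 + (real P - 1) * EX2) \<le> L * \<gamma>\<^sup>2 / 2 * (real K * SH) + L * \<gamma>\<^sup>2 * (real K)\<^sup>2 * m / (2 * real P)"
  proof -
    have PP: "real P - 1 \<ge> 0" using P by auto
    have "X2 + (real P - 1) * EX2 \<le> real K * (SH + real K * m) + (real P - 1) * (real K * SH)"
    proof -
      have "X2 \<le> real K * (SH + real K * m)" using X2 SS_le unfolding SS_def
        by (meson mult_left_mono of_nat_0_le_iff order_trans)
      moreover have "(real P - 1) * EX2 \<le> (real P - 1) * (real K * SH)"
        using EX2 PP unfolding SH_def by (intro mult_left_mono) auto
      ultimately show ?thesis by linarith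
    qed
    also have "\<dots> = real P * (real K * SH) + (real K)\<^sup>2 * m" by (simp add: algebra_simps power2_eq_square)
    finally have "L * \<gamma>\<^sup>2 / (2 * real P) * (X2 + (real P - 1) * EX2) \<le> L * \<gamma>\<^sup>2 / (2 * real P) * (real P * (real K * SH) + (real K)\<^sup>2 * m)"
      using L \<gamma> P by (intro mult_left_mono) auto
    also have "\<dots> = L * \<gamma>\<^sup>2 / 2 * (real K * SH) + L * \<gamma>\<^sup>2 * (real K)\<^sup>2 * m / (2 * real P)"
      using P by (simp add: field_simps)
    finally show ?thesis .
  qed
  have Q3: "\<gamma> / 2 * (SH - L * \<gamma> * real K * SH - L\<^sup>2 * \<gamma>\<^sup>2 * TH) \<ge> \<gamma> / 2 * (a2 * (\<delta> - 1))"
  proof -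
    have "a2 * (\<delta> - 1) \<le> a2 * (1 - L * \<gamma> * real K - L\<^sup>2 * \<gamma>\<^sup>2 * (real K * (real K - 1) / 2))"
      using six a2 by (intro mult_left_mono) auto
    then show ?thesis using Q \<gamma> by (intro mult_left_mono) auto
  qed
  have Q2v: "Q2 = (real K - 1) * real K * (2 * real K - 1) / 6" unfolding Q2_def by (rule sq_sum)
  have "- \<gamma> * (\<Sum>k=1..K. E k) + L * \<gamma>\<^sup>2 / (2 * real P) * (X2 + (real P - 1) * EX2)
      \<le> - \<gamma> / 2 * (real K * a2) - \<gamma> / 2 * (SH - L * \<gamma> * real K * SH - L\<^sup>2 * \<gamma>\<^sup>2 * TH)
         + \<gamma> / 2 * L\<^sup>2 * \<gamma>\<^sup>2 * m * Q2 + L * \<gamma>\<^sup>2 * (real K)\<^sup>2 * m / (2 * real P)"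
    using part1 part2 by (simp add: algebra_simps power2_eq_square)
  also have "\<dots> \<le> - \<gamma> / 2 * (real K * a2) - \<gamma> / 2 * (a2 * (\<delta> - 1))
         + \<gamma> / 2 * L\<^sup>2 * \<gamma>\<^sup>2 * m * Q2 + L * \<gamma>\<^sup>2 * (real K)\<^sup>2 * m / (2 * real P)"
    using Q3 by linarith
  also have "\<dots> = - \<gamma> * (real K - 1 + \<delta>) / 2 * a2 + L * \<gamma>\<^sup>2 * (real K)\<^sup>2 * m / (2 * real P)
        + L\<^sup>2 * \<gamma>^3 * m * (real K - 1) * real K * (2 * real K - 1) / 12"
  proof -
    have e1: "- \<gamma> / 2 * (real K * a2) - \<gamma> / 2 * (a2 * (\<delta> - 1)) = - \<gamma> * (real K - 1 + \<delta>) / 2 * a2"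
      by (simp add: field_simps)
    have e2: "\<gamma> / 2 * L\<^sup>2 * \<gamma>\<^sup>2 * m * Q2 = L\<^sup>2 * \<gamma>^3 * m * (real K - 1) * real K * (2 * real K - 1) / 12"
      unfolding Q2v by (simp add: field_simps power2_eq_square power3_eq_cube)
    show ?thesis using e1 e2 by linarith
  qed
  finally show ?thesis .
qed

lemma dep_sum:
  fixes f :: "'j \<Rightarrow> ('i \<Rightarrow> 'x) \<Rightarrow> 'b::comm_monoid_add"
  assumes H: "\<And>j. j \<in> J \<Longrightarrow> dep S (f j)"
  shows "dep S (\<lambda>\<omega>. \<Sum>j\<in>J. f j \<omega>)"
  unfolding dep_def
proof (intro allI impI)
  fix \<omega> \<omega>' :: "'i \<Rightarrow> 'x" assume eq: "\<forall>i\<in>S. \<omega> i = \<omega>' i"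
  have "f j \<omega> = f j \<omega>'" if "j \<in> J" for j using H[OF that] eq unfolding dep_def by blast
  then show "(\<Sum>j\<in>J. f j \<omega>) = (\<Sum>j\<in>J. f j \<omega>')" by (intro sum.cong) auto
qed

lemma dep_const: "dep S (\<lambda>_. c)" unfolding dep_def by simp

definition Cset :: "nat \<Rightarrow> nat \<Rightarrow> nat \<Rightarrow> sidx set" where
  "Cset n j k = {i. fst i = n \<and> fst (snd i) = j \<and> fst (snd (snd i)) = k}"
definition Lset :: "nat \<Rightarrow> nat \<Rightarrow> nat \<Rightarrow> sidx set" where
  "Lset n j k = {i. fst i = n \<and> fst (snd i) = j \<and> fst (snd (snd i)) \<le> k}"

locale kavg = omsp D for D :: "'x measure" +
  fixes F :: "'a::euclidean_space \<Rightarrow> real" and gradF :: "'a \<Rightarrow> 'a" and L M :: real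
    and G :: "'a \<Rightarrow> 'x \<Rightarrow> 'a" and \<gamma> :: "nat \<Rightarrow> real" and B :: "nat \<Rightarrow> nat"
  assumes grad: "\<And>w. GDERIV F w :> gradF w"
    and L_pos: "L > 0"
    and lip: "\<And>w w'. norm (gradF w - gradF w') \<le> L * norm (w - w')"
    and G_meas: "(\<lambda>(w, x). G w x) \<in> borel_measurable (borel \<Otimes>\<^sub>M D)"
    and G_int: "\<And>w. integrable D (G w)"
    and G_int2: "\<And>w. integrable D (\<lambda>x. (norm (G w x))\<^sup>2)"
    and unbiased: "\<And>w. (\<integral>x. G w x \<partial>D) = gradF w"
    and variance: "\<And>w. (\<integral>x. (norm (G w x))\<^sup>2 \<partial>D) - (norm (\<integral>x. G w x \<partial>D))\<^sup>2 \<le> M"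
    and M_nonneg: "M \<ge> 0"
begin

interpretation O: prob_space \<Omega> by (rule prob_\<Omega>)
interpretation DD: prob_space D by (rule D)

definition gb :: "'a \<Rightarrow> (sidx \<Rightarrow> 'x) \<Rightarrow> nat \<Rightarrow> nat \<Rightarrow> nat \<Rightarrow> 'a" where
  "gb v \<omega> n j k = (1 / real (B n)) *\<^sub>R (\<Sum>s=1..B n. G v (\<omega> (n, j, k, s)))"

abbreviation loc where "loc \<omega> n j v k \<equiv> kavg_local G \<gamma> B \<omega> n j v k"

lemma loc_Suc: "loc \<omega> n j v (Suc k) = loc \<omega> n j v k - \<gamma> n *\<^sub>R gb (loc \<omega> n j v k) \<omega> n j (Suc k)"
  by (simp add: gb_def)

lemma meas_G:
  assumes f: "f \<in> borel_measurable \<Omega>"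
  shows "(\<lambda>\<omega>. G (f \<omega>) (\<omega> i)) \<in> borel_measurable \<Omega>"
proof -
  have "(\<lambda>\<omega>. (f \<omega>, \<omega> i)) \<in> \<Omega> \<rightarrow>\<^sub>M borel \<Otimes>\<^sub>M D"
    using f by measurable
  from measurable_compose[OF this G_meas] show ?thesis by simp
qed

lemma meas_gb:
  assumes f: "f \<in> borel_measurable \<Omega>"
  shows "(\<lambda>\<omega>. gb (f \<omega>) \<omega> n j k) \<in> borel_measurable \<Omega>"
  unfolding gb_def by (intro borel_measurable_scaleR borel_measurable_sum borel_measurable_const meas_G f)

lemma meas_loc:
  assumes f: "f \<in> borel_measurable \<Omega>"
  shows "(\<lambda>\<omega>. loc \<omega> n j (f \<omega>) k) \<in> borel_measurable \<Omega>"
proof (induction k)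
  case 0 then show ?case using f by simp
next
  case (Suc k)
  show ?case unfolding loc_Suc
    by (intro borel_measurable_diff borel_measurable_scaleR borel_measurable_const meas_gb Suc)
qed

lemma meas_seq: "(\<lambda>\<omega>. kavg_seq G P K \<gamma> B w1 \<omega> m) \<in> borel_measurable \<Omega>"
proof (induction m)
  case 0 then show ?case by simp
next
  case (Suc m)
  show ?case by (simp only: kavg_seq.simps)
      (intro borel_measurable_scaleR borel_measurable_sum borel_measurable_const meas_loc Suc)
qed

lemma dep_gb: "dep (Cset n j k) (\<lambda>\<omega>. gb v \<omega> n j k)"
  unfolding dep_def gb_def Cset_def by (auto intro!: sum.cong arg_cong[where f="\<lambda>x. _ *\<^sub>R x"])

lemma dep_loc:
  assumes f: "dep A f"
  shows "dep (A \<union> Lset n j k) (\<lambda>\<omega>. loc \<omega> n j (f \<omega>) k)"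
proof (induction k)
  case 0 then show ?case using f by (simp add: dep_mono)
next
  case (Suc k)
  show ?case unfolding dep_def
  proof (intro allI impI)
    fix \<omega> \<omega>' :: "sidx \<Rightarrow> 'x" assume eq: "\<forall>i\<in>A \<union> Lset n j (Suc k). \<omega> i = \<omega>' i"
    have sub: "A \<union> Lset n j k \<subseteq> A \<union> Lset n j (Suc k)" by (auto simp: Lset_def)
    have e1: "loc \<omega> n j (f \<omega>) k = loc \<omega>' n j (f \<omega>') k"
      using Suc eq sub unfolding dep_def by blast
    have e2: "\<omega> (n, j, Suc k, s) = \<omega>' (n, j, Suc k, s)" for s
      using eq by (auto simp: Lset_def)
    show "loc \<omega> n j (f \<omega>) (Suc k) = loc \<omega>' n j (f \<omega>') (Suc k)"
      unfolding loc_Suc gb_def using e1 e2 by simp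
  qed
qed

lemma dep_seq: "dep {i. fst i \<le> m} (\<lambda>\<omega>. kavg_seq G P K \<gamma> B w1 \<omega> m)"
proof (induction m)
  case 0 then show ?case by (simp add: dep_const)
next
  case (Suc m)
  have "dep {i. fst i \<le> Suc m} (\<lambda>\<omega>. loc \<omega> (Suc m) j (kavg_seq G P K \<gamma> B w1 \<omega> m) K)" for j
    by (rule dep_mono[OF dep_loc[OF Suc]]) (auto simp: Lset_def)
  then show ?case by (simp only: kavg_seq.simps) (intro dep_comp[where h="\<lambda>x. _ *\<^sub>R x"] dep_sum)
qed

lemma comp_integrable:
  fixes f :: "'x \<Rightarrow> 'b::{banach, second_countable_topology}"
  assumes f: "integrable D f"
  shows "integrable \<Omega> (\<lambda>\<omega>. f (\<omega> i))" and "(\<integral>\<omega>. f (\<omega> i) \<partial>\<Omega>) = (\<integral>x. f x \<partial>D)"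
proof -
  have d: "distr \<Omega> D (\<lambda>\<omega>. \<omega> i) = D"
    using distr_PiM_component[of UNIV "\<lambda>_. D" i] D by simp
  have m: "(\<lambda>\<omega>. \<omega> i) \<in> \<Omega> \<rightarrow>\<^sub>M D" by measurable
  have fm: "f \<in> borel_measurable D" using f by auto
  show "integrable \<Omega> (\<lambda>\<omega>. f (\<omega> i))"
    using integrable_distr_eq[OF m fm] f d by simp
  show "(\<integral>\<omega>. f (\<omega> i) \<partial>\<Omega>) = (\<integral>x. f x \<partial>D)"
    using integral_distr[OF m fm] d by simp
qed

end

context kavg begin

interpretation O: prob_space \<Omega> by (rule prob_\<Omega>)

lemma mb:
  assumes b: "B n \<ge> 1"
  shows "integrable \<Omega> (\<lambda>\<omega>. gb v \<omega> n j k)" "(\<integral>\<omega>. gb v \<omega> n j k \<partial>\<Omega>) = gradF v"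
    "integrable \<Omega> (\<lambda>\<omega>. (norm (gb v \<omega> n j k))\<^sup>2)"
    "(\<integral>\<omega>. (norm (gb v \<omega> n j k))\<^sup>2 \<partial>\<Omega>) \<le> (norm (gradF v))\<^sup>2 + M / real (B n)"
proof -
  define Y where "Y s \<omega> = G v (\<omega> (n, j, k, s))" for s :: nat and \<omega> :: "sidx \<Rightarrow> 'x"
  define b where "b = B n"
  define E2 where "E2 = (\<integral>x. (norm (G v x))\<^sup>2 \<partial>D)"
  define g2 where "g2 = (norm (gradF v))\<^sup>2"
  have bpos: "real b \<ge> 1" using b by (simp add: b_def)
  have gbY: "gb v \<omega> n j k = (1 / real b) *\<^sub>R (\<Sum>s=1..b. Y s \<omega>)" for \<omega>
    by (simp add: gb_def Y_def b_def)
  have iY: "integrable \<Omega> (Y s)" and eY: "integral\<^sup>L \<Omega> (Y s) = gradF v" for s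
    using comp_integrable[OF G_int[of v], of "(n,j,k,s)"] unbiased[of v] by (auto simp: Y_def[abs_def])
  show i1: "integrable \<Omega> (\<lambda>\<omega>. gb v \<omega> n j k)"
    unfolding gbY using iY by auto
  show "(\<integral>\<omega>. gb v \<omega> n j k \<partial>\<Omega>) = gradF v"
    unfolding gbY using bpos by (simp add: integral_sum iY eY sum_constant_scaleR)
  define cst where "cst s t = (if s = t then E2 else g2)" for s t :: nat
  have pair: "integrable \<Omega> (\<lambda>\<omega>. Y s \<omega> \<bullet> Y t \<omega>) \<and> (\<integral>\<omega>. Y s \<omega> \<bullet> Y t \<omega> \<partial>\<Omega>) = cst s t" for s t
  proof (cases "s = t")
    case True
    have "integrable \<Omega> (\<lambda>\<omega>. (norm (G v (\<omega> (n,j,k,s))))\<^sup>2)" "(\<integral>\<omega>. (norm (G v (\<omega> (n,j,k,s))))\<^sup>2 \<partial>\<Omega>) = E2"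
      using comp_integrable[OF G_int2[of v], of "(n,j,k,s)"] by (auto simp: E2_def)
    then show ?thesis using True by (simp add: Y_def cst_def power2_norm_eq_inner)
  next
    case False
    have d1: "dep {(n,j,k,s)} (Y s)" unfolding dep_def Y_def by auto
    have d2: "dep (- {(n,j,k,s)}) (Y t)" using False unfolding dep_def Y_def by auto
    show ?thesis using indep_inner[OF iY iY d1 d2] False eY
      by (simp add: cst_def g2_def power2_norm_eq_inner)
  qed
  have sq: "(norm (gb v \<omega> n j k))\<^sup>2 = (1 / real b)\<^sup>2 * (\<Sum>s=1..b. \<Sum>t=1..b. Y s \<omega> \<bullet> Y t \<omega>)" for \<omega>
  proof -
    have "(norm (\<Sum>s=1..b. Y s \<omega>))\<^sup>2 = (\<Sum>s=1..b. \<Sum>t=1..b. Y s \<omega> \<bullet> Y t \<omega>)"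
      by (simp only: power2_norm_eq_inner inner_sum_left inner_sum_right) (rule sum.swap)
    then show ?thesis unfolding gbY by (simp add: power_mult_distrib power_divide)
  qed
  show "integrable \<Omega> (\<lambda>\<omega>. (norm (gb v \<omega> n j k))\<^sup>2)"
    unfolding sq using pair by (intro integrable_mult_right integrable_sum) auto
  have "(\<integral>\<omega>. (norm (gb v \<omega> n j k))\<^sup>2 \<partial>\<Omega>) = (1 / real b)\<^sup>2 * (\<Sum>s=1..b. \<Sum>t=1..b. cst s t)"
    unfolding sq using pair by (simp add: integral_sum integrable_sum)
  also have "(\<Sum>s=1..b. \<Sum>t=1..b. cst s t) = real b * (E2 + (real b - 1) * g2)"
  proof -
    have "(\<Sum>t=1..b. cst s t) = E2 + (real b - 1) * g2" if s: "s \<in> {1..b}" for s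
    proof -
      have "(\<Sum>t=1..b. cst s t) = cst s s + (\<Sum>t\<in>{1..b} - {s}. cst s t)"
        using s by (simp add: sum.remove)
      also have "(\<Sum>t\<in>{1..b} - {s}. cst s t) = (\<Sum>t\<in>{1..b} - {s}. g2)"
        by (intro sum.cong) (auto simp: cst_def)
      also have "\<dots> = (real b - 1) * g2" using s by (simp add: of_nat_diff)
      finally show ?thesis by (simp add: cst_def)
    qed
    then have "(\<Sum>s=1..b. \<Sum>t=1..b. cst s t) = (\<Sum>s=1..b. E2 + (real b - 1) * g2)"
      by (intro sum.cong) auto
    then show ?thesis by simp
  qed
  also have "(1 / real b)\<^sup>2 * (real b * (E2 + (real b - 1) * g2)) = (E2 + (real b - 1) * g2) / real b"
    using bpos by (simp add: power2_eq_square field_simps)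
  also have "\<dots> \<le> (M + g2 + (real b - 1) * g2) / real b"
  proof -
    have "E2 \<le> M + g2" using variance[of v] unbiased[of v] by (simp add: E2_def g2_def)
    then show ?thesis using bpos by (intro divide_right_mono) auto
  qed
  also have "\<dots> = g2 + M / real b" using bpos by (simp add: field_simps)
  finally show "(\<integral>\<omega>. (norm (gb v \<omega> n j k))\<^sup>2 \<partial>\<Omega>) \<le> (norm (gradF v))\<^sup>2 + M / real (B n)"
    by (simp add: g2_def b_def)
qed

end

lemma integrable_nn_le:
  fixes f :: "'b \<Rightarrow> real"
  assumes m: "f \<in> borel_measurable N" and nn: "\<And>x. f x \<ge> 0" and c: "c \<ge> 0"
    and le: "(\<integral>\<^sup>+x. ennreal (f x) \<partial>N) \<le> ennreal c"
  shows "integrable N f" "integral\<^sup>L N f \<le> c"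
proof -
  show i: "integrable N f"
  proof -
    have "(\<integral>\<^sup>+x. ennreal (f x) \<partial>N) < \<infinity>" using le by (rule le_less_trans) simp
    then show ?thesis unfolding integrable_iff_bounded using m nn by simp
  qed
  have "ennreal (integral\<^sup>L N f) = (\<integral>\<^sup>+x. ennreal (f x) \<partial>N)"
    using nn_integral_eq_integral[OF i] nn by simp
  with le have "ennreal (integral\<^sup>L N f) \<le> ennreal c" by simp
  then show "integral\<^sup>L N f \<le> c" using ennreal_le_iff[OF c] by simp
qed


context kavg begin

interpretation O: prob_space \<Omega> by (rule prob_\<Omega>)

lemma integrable_from_sq:
  fixes g :: "_ \<Rightarrow> 'b::euclidean_space"
  assumes m: "g \<in> borel_measurable \<Omega>" and i: "integrable \<Omega> (\<lambda>x. (norm (g x))\<^sup>2)"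
  shows "integrable \<Omega> g"
proof -
  have i2: "integrable \<Omega> (\<lambda>x. 1 + (norm (g x))\<^sup>2)"
    using i by (intro Bochner_Integration.integrable_add) auto
  have "norm (g x) \<le> 1 + (norm (g x))\<^sup>2" for x
  proof (cases "norm (g x) \<le> 1")
    case True then show ?thesis by (simp add: add_increasing2)
  next
    case False
    then have "norm (g x) * 1 \<le> norm (g x) * norm (g x)" by (intro mult_left_mono) auto
    then show ?thesis by (simp add: power2_eq_square)
  qed
  then show ?thesis
    by (intro Bochner_Integration.integrable_bound[OF i2 m]) auto
qed

lemma jensen_sq:
  fixes h :: "_ \<Rightarrow> 'b::euclidean_space"
  assumes h: "integrable \<Omega> h" and h2: "integrable \<Omega> (\<lambda>x. (norm (h x))\<^sup>2)"
  shows "(norm (integral\<^sup>L \<Omega> h))\<^sup>2 \<le> (\<integral>x. (norm (h x))\<^sup>2 \<partial>\<Omega>)"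
proof -
  define \<mu> where "\<mu> = integral\<^sup>L \<Omega> h"
  have "(norm \<mu>)\<^sup>2 = \<mu> \<bullet> \<mu>" by (simp add: power2_norm_eq_inner)
  also have "\<dots> = (\<integral>x. \<mu> \<bullet> h x \<partial>\<Omega>)" using h by (simp add: \<mu>_def)
  also have "\<dots> \<le> (\<integral>x. ((norm \<mu>)\<^sup>2 + (norm (h x))\<^sup>2) / 2 \<partial>\<Omega>)"
  proof (rule integral_mono)
    show "integrable \<Omega> (\<lambda>x. \<mu> \<bullet> h x)" using h by simp
    show "integrable \<Omega> (\<lambda>x. ((norm \<mu>)\<^sup>2 + (norm (h x))\<^sup>2) / 2)" using h2 by auto
    fix x
    have "\<mu> \<bullet> h x \<le> norm \<mu> * norm (h x)" by (rule Cauchy_Schwarz_ineq2[THEN abs_le_D1])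
    also have "\<dots> \<le> ((norm \<mu>)\<^sup>2 + (norm (h x))\<^sup>2) / 2"
      using sum_squares_bound[of "norm \<mu>" "norm (h x)"] by (simp add: power2_eq_square)
    finally show "\<mu> \<bullet> h x \<le> ((norm \<mu>)\<^sup>2 + (norm (h x))\<^sup>2) / 2" .
  qed
  also have "\<dots> = ((norm \<mu>)\<^sup>2 + (\<integral>x. (norm (h x))\<^sup>2 \<partial>\<Omega>)) / 2"
    using h2 by (simp add: Bochner_Integration.integral_add O.prob_space)
  finally show ?thesis by (simp add: \<mu>_def)
qed

lemma gradF_cont: "continuous_on UNIV gradF"
  by (rule lipschitz_on_continuous_on[of L], rule lipschitz_onI)
     (use lip L_pos in \<open>auto simp: dist_norm\<close>)

lemma meas_gradF[measurable]: "gradF \<in> borel_measurable borel"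
  by (rule borel_measurable_continuous_onI[OF gradF_cont])

lemma F_cont: "continuous_on UNIV F"
  using grad by (intro continuous_at_imp_continuous_on) (auto simp: gderiv_def intro: has_derivative_continuous)

lemma meas_F[measurable]: "F \<in> borel_measurable borel"
  by (rule borel_measurable_continuous_onI[OF F_cont])

lemma gradF_sq_bound: "(norm (gradF w))\<^sup>2 \<le> 2 * (norm (gradF v))\<^sup>2 + 2 * L\<^sup>2 * (norm (w - v))\<^sup>2"
proof -
  have "norm (gradF w) \<le> norm (gradF v) + L * norm (w - v)"
    using lip[of w v] norm_triangle_ineq[of "gradF w - gradF v" "gradF v"] by simp
  then have "(norm (gradF w))\<^sup>2 \<le> (norm (gradF v) + L * norm (w - v))\<^sup>2"
    by (intro power_mono) auto
  also have "\<dots> \<le> 2 * (norm (gradF v))\<^sup>2 + 2 * (L * norm (w - v))\<^sup>2"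
    using sum_squares_bound[of "norm (gradF v)" "L * norm (w - v)"] by (simp add: power2_eq_square algebra_simps)
  finally show ?thesis by (simp add: power_mult_distrib)
qed

lemma gb_cond:
  assumes b: "B n \<ge> 1" and um: "u \<in> borel_measurable \<Omega>" and du: "dep (- Cset n j k) u"
    and iu: "integrable \<Omega> (\<lambda>\<omega>. (norm (gradF (u \<omega>)))\<^sup>2)"
  shows "integrable \<Omega> (\<lambda>\<omega>. (norm (gb (u \<omega>) \<omega> n j k))\<^sup>2)"
    and "(\<integral>\<omega>. (norm (gb (u \<omega>) \<omega> n j k))\<^sup>2 \<partial>\<Omega>) \<le> (\<integral>\<omega>. (norm (gradF (u \<omega>)))\<^sup>2 \<partial>\<Omega>) + M / real (B n)"
    and "integrable \<Omega> (\<lambda>\<omega>. gb (u \<omega>) \<omega> n j k)"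
    and "(\<integral>\<omega>. gb (u \<omega>) \<omega> n j k \<partial>\<Omega>) = (\<integral>\<omega>. gradF (u \<omega>) \<partial>\<Omega>)"
    and "integrable \<Omega> (\<lambda>\<omega>. gradF (u \<omega>))"
proof -
  have dg: "dep (- (- Cset n j k)) (\<lambda>\<omega>. gb v \<omega> n j k)" for v using dep_gb by simp
  have mg[measurable]: "(\<lambda>\<omega>. gb (u \<omega>) \<omega> n j k) \<in> borel_measurable \<Omega>" by (rule meas_gb[OF um])
  have mgu: "(\<lambda>\<omega>. gradF (u \<omega>)) \<in> borel_measurable \<Omega>" using um by measurable
  have "(\<integral>\<^sup>+\<omega>. ennreal ((norm (gb (u \<omega>) \<omega> n j k))\<^sup>2) \<partial>\<Omega>)
      = (\<integral>\<^sup>+\<omega>. \<integral>\<^sup>+\<omega>'. ennreal ((norm (gb (u \<omega>) \<omega>' n j k))\<^sup>2) \<partial>\<Omega> \<partial>\<Omega>)"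
    by (rule cond_nn[where \<psi>="\<lambda>v \<omega>. ennreal ((norm (gb v \<omega> n j k))\<^sup>2)", OF _ du])
       (use dep_comp[OF dep_gb, where h="\<lambda>x. ennreal ((norm x)\<^sup>2)"] in auto)
  also have "\<dots> \<le> (\<integral>\<^sup>+\<omega>. ennreal ((norm (gradF (u \<omega>)))\<^sup>2 + M / real (B n)) \<partial>\<Omega>)"
  proof (rule nn_integral_mono)
    fix \<omega>
    have "(\<integral>\<^sup>+\<omega>'. ennreal ((norm (gb (u \<omega>) \<omega>' n j k))\<^sup>2) \<partial>\<Omega>) = ennreal (\<integral>\<omega>'. (norm (gb (u \<omega>) \<omega>' n j k))\<^sup>2 \<partial>\<Omega>)"
      using mb(3)[OF b] by (intro nn_integral_eq_integral) auto
    also have "\<dots> \<le> ennreal ((norm (gradF (u \<omega>)))\<^sup>2 + M / real (B n))"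
      using mb(4)[OF b] by (intro ennreal_leI) auto
    finally show "(\<integral>\<^sup>+\<omega>'. ennreal ((norm (gb (u \<omega>) \<omega>' n j k))\<^sup>2) \<partial>\<Omega>) \<le> ennreal ((norm (gradF (u \<omega>)))\<^sup>2 + M / real (B n))" .
  qed
  also have "\<dots> = ennreal ((\<integral>\<omega>. (norm (gradF (u \<omega>)))\<^sup>2 \<partial>\<Omega>) + M / real (B n))"
    using iu M_nonneg by (subst nn_integral_eq_integral) (auto simp: Bochner_Integration.integral_add O.prob_space)
  finally have le: "(\<integral>\<^sup>+\<omega>. ennreal ((norm (gb (u \<omega>) \<omega> n j k))\<^sup>2) \<partial>\<Omega>) \<le> ennreal ((\<integral>\<omega>. (norm (gradF (u \<omega>)))\<^sup>2 \<partial>\<Omega>) + M / real (B n))" .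
  have c: "(\<integral>\<omega>. (norm (gradF (u \<omega>)))\<^sup>2 \<partial>\<Omega>) + M / real (B n) \<ge> 0"
    using M_nonneg by (intro add_nonneg_nonneg integral_nonneg) auto
  show i2: "integrable \<Omega> (\<lambda>\<omega>. (norm (gb (u \<omega>) \<omega> n j k))\<^sup>2)"
    by (rule integrable_nn_le(1)[OF _ _ c le]) auto
  show "(\<integral>\<omega>. (norm (gb (u \<omega>) \<omega> n j k))\<^sup>2 \<partial>\<Omega>) \<le> (\<integral>\<omega>. (norm (gradF (u \<omega>)))\<^sup>2 \<partial>\<Omega>) + M / real (B n)"
    by (rule integrable_nn_le(2)[OF _ _ c le]) auto
  show i1: "integrable \<Omega> (\<lambda>\<omega>. gb (u \<omega>) \<omega> n j k)"
    by (rule integrable_from_sq[OF mg i2])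
  show "integrable \<Omega> (\<lambda>\<omega>. gradF (u \<omega>))"
    by (rule integrable_from_sq[OF mgu iu])
  have "(\<integral>\<omega>. gb (u \<omega>) \<omega> n j k \<partial>\<Omega>) = (\<integral>\<omega>. \<integral>\<omega>'. gb (u \<omega>) \<omega>' n j k \<partial>\<Omega> \<partial>\<Omega>)"
    by (rule cond_int[where \<psi>="\<lambda>v \<omega>. gb v \<omega> n j k", OF i1 du dg])
  also have "\<dots> = (\<integral>\<omega>. gradF (u \<omega>) \<partial>\<Omega>)"
    using mb(2)[OF b] by simp
  finally show "(\<integral>\<omega>. gb (u \<omega>) \<omega> n j k \<partial>\<Omega>) = (\<integral>\<omega>. gradF (u \<omega>) \<partial>\<Omega>)" .
qed

end

context kavg begin

interpretation O: prob_space \<Omega> by (rule prob_\<Omega>)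

definition gk :: "(sidx \<Rightarrow> 'x) \<Rightarrow> nat \<Rightarrow> nat \<Rightarrow> 'a \<Rightarrow> nat \<Rightarrow> 'a" where
  "gk \<omega> n j v i = gb (loc \<omega> n j v (i - 1)) \<omega> n j i"

lemma gk_Suc: "gk \<omega> n j v (Suc k) = gb (loc \<omega> n j v k) \<omega> n j (Suc k)"
  by (simp add: gk_def)

lemma loc_diff: "loc \<omega> n j v k - v = - \<gamma> n *\<^sub>R (\<Sum>i\<in>{1..<Suc k}. gk \<omega> n j v i)"
proof (induction k)
  case 0 then show ?case by simp
next
  case (Suc k)
  have "loc \<omega> n j v (Suc k) - v = (loc \<omega> n j v k - v) - \<gamma> n *\<^sub>R gk \<omega> n j v (Suc k)"
    by (simp only: loc_Suc gk_Suc) simp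
  also have "\<dots> = - \<gamma> n *\<^sub>R (\<Sum>i\<in>{1..<Suc (Suc k)}. gk \<omega> n j v i)"
    using Suc by (simp add: scaleR_right_distrib)
  finally show ?case .
qed

lemma meas_locv[measurable]: "(\<lambda>\<omega>. loc \<omega> n j v k) \<in> borel_measurable \<Omega>"
  using meas_loc[of "\<lambda>_. v" n j k] by simp

lemma meas_gk[measurable]: "(\<lambda>\<omega>. gk \<omega> n j v i) \<in> borel_measurable \<Omega>"
  unfolding gk_def by (rule meas_gb[OF meas_locv])

lemma dep_locv: "dep (Lset n j k) (\<lambda>\<omega>. loc \<omega> n j v k)"
  using dep_loc[where A="{}" and f="\<lambda>_. v" and n=n and j=j and k=k, OF dep_const] by simp

lemma dep_locv_C: "dep (- Cset n j (Suc k)) (\<lambda>\<omega>. loc \<omega> n j v k)"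
  by (rule dep_mono[OF dep_locv]) (auto simp: Lset_def Cset_def)

lemma proc_facts:
  assumes b: "B n \<ge> 1"
  shows "integrable \<Omega> (\<lambda>\<omega>. (norm (loc \<omega> n j v k - v))\<^sup>2)
    \<and> integrable \<Omega> (\<lambda>\<omega>. (norm (gradF (loc \<omega> n j v k)))\<^sup>2)
    \<and> integrable \<Omega> (\<lambda>\<omega>. (norm (gk \<omega> n j v (Suc k)))\<^sup>2)
    \<and> (\<integral>\<omega>. (norm (gk \<omega> n j v (Suc k)))\<^sup>2 \<partial>\<Omega>) \<le> (\<integral>\<omega>. (norm (gradF (loc \<omega> n j v k)))\<^sup>2 \<partial>\<Omega>) + M / real (B n)
    \<and> integrable \<Omega> (\<lambda>\<omega>. gk \<omega> n j v (Suc k))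
    \<and> (\<integral>\<omega>. gk \<omega> n j v (Suc k) \<partial>\<Omega>) = (\<integral>\<omega>. gradF (loc \<omega> n j v k) \<partial>\<Omega>)
    \<and> integrable \<Omega> (\<lambda>\<omega>. gradF (loc \<omega> n j v k))"
proof (induction k)
  have common: "integrable \<Omega> (\<lambda>\<omega>. (norm (gradF (loc \<omega> n j v k)))\<^sup>2)"
    if i: "integrable \<Omega> (\<lambda>\<omega>. (norm (loc \<omega> n j v k - v))\<^sup>2)" for k
  proof (rule Bochner_Integration.integrable_bound)
    show "integrable \<Omega> (\<lambda>\<omega>. 2 * (norm (gradF v))\<^sup>2 + 2 * L\<^sup>2 * (norm (loc \<omega> n j v k - v))\<^sup>2)"
      using i by auto
    show "(\<lambda>\<omega>. (norm (gradF (loc \<omega> n j v k)))\<^sup>2) \<in> borel_measurable \<Omega>" by measurable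
    show "AE \<omega> in \<Omega>. norm ((norm (gradF (loc \<omega> n j v k)))\<^sup>2) \<le> norm (2 * (norm (gradF v))\<^sup>2 + 2 * L\<^sup>2 * (norm (loc \<omega> n j v k - v))\<^sup>2)"
      using gradF_sq_bound by auto
  qed
  have rest: "integrable \<Omega> (\<lambda>\<omega>. (norm (gk \<omega> n j v (Suc k)))\<^sup>2)
    \<and> (\<integral>\<omega>. (norm (gk \<omega> n j v (Suc k)))\<^sup>2 \<partial>\<Omega>) \<le> (\<integral>\<omega>. (norm (gradF (loc \<omega> n j v k)))\<^sup>2 \<partial>\<Omega>) + M / real (B n)
    \<and> integrable \<Omega> (\<lambda>\<omega>. gk \<omega> n j v (Suc k))
    \<and> (\<integral>\<omega>. gk \<omega> n j v (Suc k) \<partial>\<Omega>) = (\<integral>\<omega>. gradF (loc \<omega> n j v k) \<partial>\<Omega>)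
    \<and> integrable \<Omega> (\<lambda>\<omega>. gradF (loc \<omega> n j v k))"
    if i: "integrable \<Omega> (\<lambda>\<omega>. (norm (gradF (loc \<omega> n j v k)))\<^sup>2)" for k
    using gb_cond[OF b meas_locv dep_locv_C i] unfolding gk_Suc by auto
  {
    case 0
    have i0: "integrable \<Omega> (\<lambda>\<omega>. (norm (loc \<omega> n j v 0 - v))\<^sup>2)" by simp
    show ?case using i0 common[OF i0] rest[OF common[OF i0]] by blast
  next
    case (Suc k)
    have "integrable \<Omega> (\<lambda>\<omega>. (norm (loc \<omega> n j v (Suc k) - v))\<^sup>2)"
    proof (rule Bochner_Integration.integrable_bound)
      show "integrable \<Omega> (\<lambda>\<omega>. 2 * (norm (loc \<omega> n j v k - v))\<^sup>2 + 2 * (\<gamma> n)\<^sup>2 * (norm (gk \<omega> n j v (Suc k)))\<^sup>2)"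
        using Suc by auto
      show "(\<lambda>\<omega>. (norm (loc \<omega> n j v (Suc k) - v))\<^sup>2) \<in> borel_measurable \<Omega>" by measurable
      show "AE \<omega> in \<Omega>. norm ((norm (loc \<omega> n j v (Suc k) - v))\<^sup>2) \<le> norm (2 * (norm (loc \<omega> n j v k - v))\<^sup>2 + 2 * (\<gamma> n)\<^sup>2 * (norm (gk \<omega> n j v (Suc k)))\<^sup>2)"
      proof (intro AE_I2)
        fix \<omega>
        have e: "loc \<omega> n j v (Suc k) - v = (loc \<omega> n j v k - v) - \<gamma> n *\<^sub>R gk \<omega> n j v (Suc k)"
          by (simp only: loc_Suc gk_Suc) simp
        have "norm (loc \<omega> n j v (Suc k) - v) \<le> norm (loc \<omega> n j v k - v) + norm (\<gamma> n *\<^sub>R gk \<omega> n j v (Suc k))"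
          unfolding e by (rule norm_triangle_ineq4)
        then have "(norm (loc \<omega> n j v (Suc k) - v))\<^sup>2 \<le> (norm (loc \<omega> n j v k - v) + norm (\<gamma> n *\<^sub>R gk \<omega> n j v (Suc k)))\<^sup>2"
          by (intro power_mono) auto
        also have "\<dots> \<le> 2 * (norm (loc \<omega> n j v k - v))\<^sup>2 + 2 * (norm (\<gamma> n *\<^sub>R gk \<omega> n j v (Suc k)))\<^sup>2"
          using sum_squares_bound[of "norm (loc \<omega> n j v k - v)" "norm (\<gamma> n *\<^sub>R gk \<omega> n j v (Suc k))"]
          by (simp add: power2_eq_square algebra_simps)
        also have "\<dots> = 2 * (norm (loc \<omega> n j v k - v))\<^sup>2 + 2 * (\<gamma> n)\<^sup>2 * (norm (gk \<omega> n j v (Suc k)))\<^sup>2"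
          by (simp add: power_mult_distrib)
        finally show "norm ((norm (loc \<omega> n j v (Suc k) - v))\<^sup>2) \<le> norm (2 * (norm (loc \<omega> n j v k - v))\<^sup>2 + 2 * (\<gamma> n)\<^sup>2 * (norm (gk \<omega> n j v (Suc k)))\<^sup>2)"
          by simp
      qed
    qed
    then show ?case using common rest by blast
  }
qed

end

context kavg begin

interpretation O: prob_space \<Omega> by (rule prob_\<Omega>)

definition Xp :: "(sidx \<Rightarrow> 'x) \<Rightarrow> nat \<Rightarrow> nat \<Rightarrow> 'a \<Rightarrow> nat \<Rightarrow> 'a" where
  "Xp \<omega> n j v K = (\<Sum>k=1..K. gk \<omega> n j v k)"

lemma loc_Xp: "loc \<omega> n j v K - v = - \<gamma> n *\<^sub>R Xp \<omega> n j v K"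
proof -
  have "{1..<Suc K} = {1..K}" by auto
  then show ?thesis using loc_diff[of \<omega> n j v K] by (simp add: Xp_def)
qed

lemma meas_Xp[measurable]: "(\<lambda>\<omega>. Xp \<omega> n j v K) \<in> borel_measurable \<Omega>"
  unfolding Xp_def by measurable

lemma dep_gk: "dep (Lset n j k) (\<lambda>\<omega>. gk \<omega> n j v k)"
  unfolding dep_def
proof (intro allI impI)
  fix \<omega> \<omega>' :: "sidx \<Rightarrow> 'x" assume eq: "\<forall>i\<in>Lset n j k. \<omega> i = \<omega>' i"
  have "Lset n j (k - 1) \<subseteq> Lset n j k" by (auto simp: Lset_def)
  then have e1: "loc \<omega> n j v (k - 1) = loc \<omega>' n j v (k - 1)"
    using dep_locv[of n j "k - 1" v] eq unfolding dep_def by blast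
  have e2: "\<omega> (n, j, k, s) = \<omega>' (n, j, k, s)" for s using eq by (auto simp: Lset_def)
  show "gk \<omega> n j v k = gk \<omega>' n j v k" unfolding gk_def gb_def using e1 e2 by simp
qed

lemma dep_Xp: "dep (Lset n j K) (\<lambda>\<omega>. Xp \<omega> n j v K)"
  unfolding Xp_def by (intro dep_sum dep_mono[OF dep_gk]) (auto simp: Lset_def)

lemma gk_facts:
  assumes b: "B n \<ge> 1" and k: "k \<ge> 1"
  shows "integrable \<Omega> (\<lambda>\<omega>. (norm (gk \<omega> n j v k))\<^sup>2)"
    "(\<integral>\<omega>. (norm (gk \<omega> n j v k))\<^sup>2 \<partial>\<Omega>) \<le> (\<integral>\<omega>. (norm (gradF (loc \<omega> n j v (k - 1))))\<^sup>2 \<partial>\<Omega>) + M / real (B n)"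
    "integrable \<Omega> (\<lambda>\<omega>. gk \<omega> n j v k)"
    "(\<integral>\<omega>. gk \<omega> n j v k \<partial>\<Omega>) = (\<integral>\<omega>. gradF (loc \<omega> n j v (k - 1)) \<partial>\<Omega>)"
    "integrable \<Omega> (\<lambda>\<omega>. gradF (loc \<omega> n j v (k - 1)))"
    "integrable \<Omega> (\<lambda>\<omega>. (norm (gradF (loc \<omega> n j v (k - 1))))\<^sup>2)"
    "integrable \<Omega> (\<lambda>\<omega>. (norm (loc \<omega> n j v (k - 1) - v))\<^sup>2)"
  using proc_facts[OF b, of j v "k - 1"] k by auto

lemma proc:
  assumes b: "B n \<ge> 1" and K: "K \<ge> 1" and P: "P \<ge> 1" and \<gamma>: "\<gamma> n > 0"
    and step1: "1 \<ge> L\<^sup>2 * (\<gamma> n)\<^sup>2 * (real K + 1) * (real K - 2) / 2 + L * \<gamma> n * real K"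
    and step2: "1 - \<delta> \<ge> L\<^sup>2 * (\<gamma> n)\<^sup>2"
  shows "integrable \<Omega> (\<lambda>\<omega>. Xp \<omega> n j v K)" "integrable \<Omega> (\<lambda>\<omega>. (norm (Xp \<omega> n j v K))\<^sup>2)"
    "- \<gamma> n * (\<integral>\<omega>. gradF v \<bullet> Xp \<omega> n j v K \<partial>\<Omega>)
       + L * (\<gamma> n)\<^sup>2 / (2 * real P) * ((\<integral>\<omega>. (norm (Xp \<omega> n j v K))\<^sup>2 \<partial>\<Omega>) + (real P - 1) * (norm (\<integral>\<omega>. Xp \<omega> n j v K \<partial>\<Omega>))\<^sup>2)
     \<le> - \<gamma> n * (real K - 1 + \<delta>) / 2 * (norm (gradF v))\<^sup>2 + L * (\<gamma> n)\<^sup>2 * (real K)\<^sup>2 * (M / real (B n)) / (2 * real P)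
        + L\<^sup>2 * (\<gamma> n)^3 * (M / real (B n)) * (real K - 1) * real K * (2 * real K - 1) / 12"
proof -
  define a where "a = gradF v"
  define H where "H k = (\<integral>\<omega>. (norm (gradF (loc \<omega> n j v (k - 1))))\<^sup>2 \<partial>\<Omega>)" for k
  define S where "S k = (\<integral>\<omega>. (norm (gk \<omega> n j v k))\<^sup>2 \<partial>\<Omega>)" for k
  define E where "E k = (\<integral>\<omega>. a \<bullet> gk \<omega> n j v k \<partial>\<Omega>)" for k
  define g where "g = \<gamma> n"
  have ig: "integrable \<Omega> (\<lambda>\<omega>. gk \<omega> n j v k)" if "k \<in> {1..K}" for k using gk_facts(3)[OF b] that by auto
  have ig2: "integrable \<Omega> (\<lambda>\<omega>. (norm (gk \<omega> n j v k))\<^sup>2)" if "k \<ge> 1" for k using gk_facts(1)[OF b] that by auto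
  show iX: "integrable \<Omega> (\<lambda>\<omega>. Xp \<omega> n j v K)" unfolding Xp_def using ig by auto
  have Xsq: "(norm (Xp \<omega> n j v K))\<^sup>2 \<le> real K * (\<Sum>k=1..K. (norm (gk \<omega> n j v k))\<^sup>2)" for \<omega>
    unfolding Xp_def using norm_sum_sq_le[of "\<lambda>k. gk \<omega> n j v k" "{1..K}"] by simp
  have iS: "integrable \<Omega> (\<lambda>\<omega>. real K * (\<Sum>k=1..K. (norm (gk \<omega> n j v k))\<^sup>2))"
    using ig2 by auto
  show iX2: "integrable \<Omega> (\<lambda>\<omega>. (norm (Xp \<omega> n j v K))\<^sup>2)"
  proof (rule Bochner_Integration.integrable_bound[OF iS])
    show "AE \<omega> in \<Omega>. norm ((norm (Xp \<omega> n j v K))\<^sup>2) \<le> norm (real K * (\<Sum>k=1..K. (norm (gk \<omega> n j v k))\<^sup>2))"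
    proof (rule AE_I2)
      fix \<omega> show "norm ((norm (Xp \<omega> n j v K))\<^sup>2) \<le> norm (real K * (\<Sum>k=1..K. (norm (gk \<omega> n j v k))\<^sup>2))"
        using Xsq[of \<omega>] by (simp add: abs_of_nonneg sum_nonneg)
    qed
  qed simp
  have X2: "(\<integral>\<omega>. (norm (Xp \<omega> n j v K))\<^sup>2 \<partial>\<Omega>) \<le> real K * (\<Sum>k=1..K. S k)"
  proof -
    have "(\<integral>\<omega>. (norm (Xp \<omega> n j v K))\<^sup>2 \<partial>\<Omega>) \<le> (\<integral>\<omega>. real K * (\<Sum>k=1..K. (norm (gk \<omega> n j v k))\<^sup>2) \<partial>\<Omega>)"
      by (rule integral_mono[OF iX2 iS Xsq])
    also have "\<dots> = real K * (\<Sum>k=1..K. S k)"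
      using ig2 by (simp add: S_def integral_sum)
    finally show ?thesis .
  qed
  have EX2: "(norm (\<integral>\<omega>. Xp \<omega> n j v K \<partial>\<Omega>))\<^sup>2 \<le> real K * (\<Sum>k=1..K. H k)"
  proof -
    have "(\<integral>\<omega>. Xp \<omega> n j v K \<partial>\<Omega>) = (\<Sum>k=1..K. (\<integral>\<omega>. gradF (loc \<omega> n j v (k - 1)) \<partial>\<Omega>))"
      unfolding Xp_def using ig gk_facts(4)[OF b] by (simp add: integral_sum)
    then have "(norm (\<integral>\<omega>. Xp \<omega> n j v K \<partial>\<Omega>))\<^sup>2 \<le> real K * (\<Sum>k=1..K. (norm (\<integral>\<omega>. gradF (loc \<omega> n j v (k - 1)) \<partial>\<Omega>))\<^sup>2)"
      using norm_sum_sq_le[of "\<lambda>k. (\<integral>\<omega>. gradF (loc \<omega> n j v (k - 1)) \<partial>\<Omega>)" "{1..K}"] by simp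
    also have "\<dots> \<le> real K * (\<Sum>k=1..K. H k)"
      unfolding H_def
      by (intro mult_left_mono sum_mono jensen_sq gk_facts(5)[OF b] gk_facts(6)[OF b]) auto
    finally show ?thesis .
  qed
  have sumE: "(\<integral>\<omega>. a \<bullet> Xp \<omega> n j v K \<partial>\<Omega>) = (\<Sum>k=1..K. E k)"
    unfolding Xp_def E_def using ig by (simp add: inner_sum_right integral_sum)
  have Hnn: "H k \<ge> 0" for k unfolding H_def by (simp add: integral_nonneg)
  have H1: "H 1 = (norm a)\<^sup>2" by (simp add: H_def a_def O.prob_space)
  have Sle: "S k \<le> H k + M / real (B n)" if "k \<in> {1..K}" for k
    unfolding S_def H_def using gk_facts(2)[OF b] that by auto
  have Ek: "E k \<ge> ((norm a)\<^sup>2 + H k - L\<^sup>2 * g\<^sup>2 * ((real k - 1) * (\<Sum>i\<in>{1..<k}. S i))) / 2"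
    if k: "k \<in> {1..K}" for k
  proof -
    define h where "h \<omega> = gradF (loc \<omega> n j v (k - 1))" for \<omega>
    have k1: "k \<ge> 1" using k by auto
    have ih: "integrable \<Omega> h" unfolding h_def using gk_facts(5)[OF b k1] .
    have ih2: "integrable \<Omega> (\<lambda>\<omega>. (norm (h \<omega>))\<^sup>2)" unfolding h_def using gk_facts(6)[OF b k1] .
    have "E k = a \<bullet> (\<integral>\<omega>. gk \<omega> n j v k \<partial>\<Omega>)" unfolding E_def using ig[OF k] by simp
    also have "\<dots> = a \<bullet> integral\<^sup>L \<Omega> h" using gk_facts(4)[OF b k1] by (simp add: h_def[abs_def])
    also have "\<dots> = (\<integral>\<omega>. a \<bullet> h \<omega> \<partial>\<Omega>)" using ih by simp
    finally have Ee: "E k = (\<integral>\<omega>. a \<bullet> h \<omega> \<partial>\<Omega>)" .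
    define c where "c = L\<^sup>2 * g\<^sup>2 * (real k - 1)"
    have c0: "c \<ge> 0" unfolding c_def using k1 by auto
    have ptw: "a \<bullet> h \<omega> \<ge> ((norm a)\<^sup>2 + (norm (h \<omega>))\<^sup>2 - c * (\<Sum>i\<in>{1..<k}. (norm (gk \<omega> n j v i))\<^sup>2)) / 2" for \<omega>
    proof -
      have eq: "(norm (h \<omega> - a))\<^sup>2 = (norm (h \<omega>))\<^sup>2 - 2 * (a \<bullet> h \<omega>) + (norm a)\<^sup>2"
        by (simp add: power2_norm_eq_inner inner_diff_left inner_diff_right inner_commute)
      have "norm (h \<omega> - a) \<le> L * norm (loc \<omega> n j v (k - 1) - v)"
        unfolding h_def a_def by (rule lip)
      then have "(norm (h \<omega> - a))\<^sup>2 \<le> (L * norm (loc \<omega> n j v (k - 1) - v))\<^sup>2"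
        by (intro power_mono) auto
      also have "loc \<omega> n j v (k - 1) - v = - g *\<^sub>R (\<Sum>i\<in>{1..<k}. gk \<omega> n j v i)"
        using loc_diff[of \<omega> n j v "k - 1"] k1 by (simp add: g_def)
      also have "(L * norm (- g *\<^sub>R (\<Sum>i\<in>{1..<k}. gk \<omega> n j v i)))\<^sup>2 = L\<^sup>2 * g\<^sup>2 * (norm (\<Sum>i\<in>{1..<k}. gk \<omega> n j v i))\<^sup>2"
        by (simp add: power_mult_distrib)
      also have "\<dots> \<le> L\<^sup>2 * g\<^sup>2 * (real (card {1..<k}) * (\<Sum>i\<in>{1..<k}. (norm (gk \<omega> n j v i))\<^sup>2))"
        by (intro mult_left_mono norm_sum_sq_le) auto
      also have "\<dots> = c * (\<Sum>i\<in>{1..<k}. (norm (gk \<omega> n j v i))\<^sup>2)"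
        using k1 by (simp add: c_def of_nat_diff)
      finally show ?thesis using eq by simp
    qed
    have i3: "integrable \<Omega> (\<lambda>\<omega>. (\<Sum>i\<in>{1..<k}. (norm (gk \<omega> n j v i))\<^sup>2))"
      using ig2 by auto
    have "E k \<ge> (\<integral>\<omega>. ((norm a)\<^sup>2 + (norm (h \<omega>))\<^sup>2 - c * (\<Sum>i\<in>{1..<k}. (norm (gk \<omega> n j v i))\<^sup>2)) / 2 \<partial>\<Omega>)"
      unfolding Ee by (rule integral_mono) (use ih ih2 i3 ptw in auto)
    also have "(\<integral>\<omega>. ((norm a)\<^sup>2 + (norm (h \<omega>))\<^sup>2 - c * (\<Sum>i\<in>{1..<k}. (norm (gk \<omega> n j v i))\<^sup>2)) / 2 \<partial>\<Omega>)
        = ((norm a)\<^sup>2 + H k - c * (\<Sum>i\<in>{1..<k}. S i)) / 2"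
      using ih2 i3 ig2 by (simp add: H_def S_def h_def integral_sum Bochner_Integration.integral_diff
          Bochner_Integration.integral_add O.prob_space)
    finally show ?thesis by (simp add: c_def mult.assoc)
  qed
  have m0: "M / real (B n) \<ge> 0" using M_nonneg by simp
  have main: "- \<gamma> n * (\<Sum>k=1..K. E k) + L * (\<gamma> n)\<^sup>2 / (2 * real P) * ((\<integral>\<omega>. (norm (Xp \<omega> n j v K))\<^sup>2 \<partial>\<Omega>) + (real P - 1) * (norm (\<integral>\<omega>. Xp \<omega> n j v K \<partial>\<Omega>))\<^sup>2)
     \<le> - \<gamma> n * (real K - 1 + \<delta>) / 2 * (norm a)\<^sup>2 + L * (\<gamma> n)\<^sup>2 * (real K)\<^sup>2 * (M / real (B n)) / (2 * real P)
        + L\<^sup>2 * (\<gamma> n)^3 * (M / real (B n)) * (real K - 1) * real K * (2 * real K - 1) / 12"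
    by (rule alg_main[OF K P L_pos \<gamma> m0 step1 step2 H1 Hnn Sle Ek[unfolded g_def] X2 EX2])
  show "- \<gamma> n * (\<integral>\<omega>. gradF v \<bullet> Xp \<omega> n j v K \<partial>\<Omega>)
       + L * (\<gamma> n)\<^sup>2 / (2 * real P) * ((\<integral>\<omega>. (norm (Xp \<omega> n j v K))\<^sup>2 \<partial>\<Omega>) + (real P - 1) * (norm (\<integral>\<omega>. Xp \<omega> n j v K \<partial>\<Omega>))\<^sup>2)
     \<le> - \<gamma> n * (real K - 1 + \<delta>) / 2 * (norm (gradF v))\<^sup>2 + L * (\<gamma> n)\<^sup>2 * (real K)\<^sup>2 * (M / real (B n)) / (2 * real P)
        + L\<^sup>2 * (\<gamma> n)^3 * (M / real (B n)) * (real K - 1) * real K * (2 * real K - 1) / 12"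
    using main sumE by (simp add: a_def)
qed

end

context kavg begin

interpretation O: prob_space \<Omega> by (rule prob_\<Omega>)

definition stp :: "nat \<Rightarrow> nat \<Rightarrow> 'a \<Rightarrow> nat \<Rightarrow> (sidx \<Rightarrow> 'x) \<Rightarrow> 'a" where
  "stp P K v n \<omega> = (1 / real P) *\<^sub>R (\<Sum>j=1..P. loc \<omega> n j v K)"

lemma stp_diff:
  assumes P: "P \<ge> 1"
  shows "stp P K v n \<omega> - v = - (\<gamma> n / real P) *\<^sub>R (\<Sum>j=1..P. Xp \<omega> n j v K)"
proof -
  have "stp P K v n \<omega> - v = (1 / real P) *\<^sub>R (\<Sum>j=1..P. loc \<omega> n j v K) - (1 / real P) *\<^sub>R (\<Sum>j=1..P. v)"
    using P by (simp add: stp_def sum_constant_scaleR)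
  also have "\<dots> = (1 / real P) *\<^sub>R (\<Sum>j=1..P. loc \<omega> n j v K - v)"
    by (simp add: sum_subtractf scaleR_diff_right)
  also have "\<dots> = (1 / real P) *\<^sub>R (\<Sum>j=1..P. - \<gamma> n *\<^sub>R Xp \<omega> n j v K)"
    by (simp add: loc_Xp)
  also have "\<dots> = - (\<gamma> n / real P) *\<^sub>R (\<Sum>j=1..P. Xp \<omega> n j v K)"
  proof -
    have "(\<Sum>j=1..P. - \<gamma> n *\<^sub>R Xp \<omega> n j v K) = - \<gamma> n *\<^sub>R (\<Sum>j=1..P. Xp \<omega> n j v K)"
      by (simp add: scaleR_sum_right)
    then show ?thesis by simp
  qed
  finally show ?thesis .
qed

lemma meas_stp[measurable]: "(\<lambda>\<omega>. stp P K v n \<omega>) \<in> borel_measurable \<Omega>"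
  unfolding stp_def by measurable

lemma step_bound:
  assumes b: "B n \<ge> 1" and K: "K \<ge> 1" and P: "P \<ge> 1" and \<gamma>: "\<gamma> n > 0"
    and step1: "1 \<ge> L\<^sup>2 * (\<gamma> n)\<^sup>2 * (real K + 1) * (real K - 2) / 2 + L * \<gamma> n * real K"
    and step2: "1 - \<delta> \<ge> L\<^sup>2 * (\<gamma> n)\<^sup>2"
  shows "integrable \<Omega> (\<lambda>\<omega>. F (stp P K v n \<omega>))"
    "(\<integral>\<omega>. F (stp P K v n \<omega>) \<partial>\<Omega>) \<le> F v - \<gamma> n * (real K - 1 + \<delta>) / 2 * (norm (gradF v))\<^sup>2
        + L * (\<gamma> n)\<^sup>2 * (real K)\<^sup>2 * (M / real (B n)) / (2 * real P)
        + L\<^sup>2 * (\<gamma> n)^3 * (M / real (B n)) * (real K - 1) * real K * (2 * real K - 1) / 12"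
proof -
  define a where "a = gradF v"
  define X where "X j \<omega> = Xp \<omega> n j v K" for j :: nat and \<omega> :: "sidx \<Rightarrow> 'x"
  define Z where "Z \<omega> = (\<Sum>j=1..P. X j \<omega>)" for \<omega>
  define d where "d \<omega> = stp P K v n \<omega> - v" for \<omega>
  define R where "R = - \<gamma> n * (real K - 1 + \<delta>) / 2 * (norm a)\<^sup>2 + L * (\<gamma> n)\<^sup>2 * (real K)\<^sup>2 * (M / real (B n)) / (2 * real P)
        + L\<^sup>2 * (\<gamma> n)^3 * (M / real (B n)) * (real K - 1) * real K * (2 * real K - 1) / 12"
  define \<mu> where "\<mu> j = integral\<^sup>L \<Omega> (X j)" for j :: nat
  have pr: "integrable \<Omega> (X j)" "integrable \<Omega> (\<lambda>\<omega>. (norm (X j \<omega>))\<^sup>2)"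
    "- \<gamma> n * (\<integral>\<omega>. a \<bullet> X j \<omega> \<partial>\<Omega>)
       + L * (\<gamma> n)\<^sup>2 / (2 * real P) * ((\<integral>\<omega>. (norm (X j \<omega>))\<^sup>2 \<partial>\<Omega>) + (real P - 1) * (norm (\<mu> j))\<^sup>2) \<le> R" for j
    using proc[OF b K P \<gamma> step1 step2, where j=j and v=v] unfolding X_def[abs_def] \<mu>_def R_def a_def by auto
  have mX[measurable]: "X j \<in> borel_measurable \<Omega>" for j unfolding X_def[abs_def] by measurable
  have dZ: "d \<omega> = - (\<gamma> n / real P) *\<^sub>R Z \<omega>" for \<omega>
    unfolding d_def Z_def X_def using stp_diff[OF P] by simp
  have iZ: "integrable \<Omega> Z" unfolding Z_def[abs_def] using pr(1) by auto
  have pairs: "integrable \<Omega> (\<lambda>\<omega>. X j \<omega> \<bullet> X j' \<omega>) \<and>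
      (\<integral>\<omega>. X j \<omega> \<bullet> X j' \<omega> \<partial>\<Omega>) = \<mu> j \<bullet> \<mu> j' + (if j = j' then (\<integral>\<omega>. (norm (X j \<omega>))\<^sup>2 \<partial>\<Omega>) - (norm (\<mu> j))\<^sup>2 else 0)"
    for j j'
  proof (cases "j = j'")
    case True
    then show ?thesis using pr(2)[of j] by (simp add: power2_norm_eq_inner)
  next
    case False
    have d1: "dep (Lset n j K) (X j)" unfolding X_def[abs_def] by (rule dep_Xp)
    have d2: "dep (- Lset n j K) (X j')" unfolding X_def[abs_def]
      by (rule dep_mono[OF dep_Xp]) (use False in \<open>auto simp: Lset_def\<close>)
    show ?thesis using indep_inner[OF pr(1) pr(1) d1 d2] False by (simp add: \<mu>_def)
  qed
  have Zsq: "(norm (Z \<omega>))\<^sup>2 = (\<Sum>j=1..P. \<Sum>j'=1..P. X j \<omega> \<bullet> X j' \<omega>)" for \<omega>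
    unfolding Z_def by (simp only: power2_norm_eq_inner inner_sum_left inner_sum_right) (rule sum.swap)
  have iZ2: "integrable \<Omega> (\<lambda>\<omega>. (norm (Z \<omega>))\<^sup>2)"
    unfolding Zsq using pairs by auto
  have EZ2: "(\<integral>\<omega>. (norm (Z \<omega>))\<^sup>2 \<partial>\<Omega>) \<le> (\<Sum>j=1..P. (\<integral>\<omega>. (norm (X j \<omega>))\<^sup>2 \<partial>\<Omega>) + (real P - 1) * (norm (\<mu> j))\<^sup>2)"
  proof -
    have "(\<integral>\<omega>. (norm (Z \<omega>))\<^sup>2 \<partial>\<Omega>) = (\<Sum>j=1..P. \<Sum>j'=1..P. \<mu> j \<bullet> \<mu> j' + (if j = j' then (\<integral>\<omega>. (norm (X j \<omega>))\<^sup>2 \<partial>\<Omega>) - (norm (\<mu> j))\<^sup>2 else 0))"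
      unfolding Zsq using pairs by (simp add: integral_sum)
    also have "\<dots> = (norm (\<Sum>j=1..P. \<mu> j))\<^sup>2 + (\<Sum>j=1..P. (\<integral>\<omega>. (norm (X j \<omega>))\<^sup>2 \<partial>\<Omega>) - (norm (\<mu> j))\<^sup>2)"
    proof -
      have "(norm (\<Sum>j=1..P. \<mu> j))\<^sup>2 = (\<Sum>j=1..P. \<Sum>j'=1..P. \<mu> j \<bullet> \<mu> j')"
        by (simp only: power2_norm_eq_inner inner_sum_left inner_sum_right) (rule sum.swap)
      then show ?thesis by (simp add: sum.distrib)
    qed
    also have "\<dots> \<le> real P * (\<Sum>j=1..P. (norm (\<mu> j))\<^sup>2) + (\<Sum>j=1..P. (\<integral>\<omega>. (norm (X j \<omega>))\<^sup>2 \<partial>\<Omega>) - (norm (\<mu> j))\<^sup>2)"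
      using norm_sum_sq_le[of \<mu> "{1..P}"] by simp
    also have "\<dots> = (\<Sum>j=1..P. (\<integral>\<omega>. (norm (X j \<omega>))\<^sup>2 \<partial>\<Omega>) + (real P - 1) * (norm (\<mu> j))\<^sup>2)"
      by (simp add: sum.distrib sum_subtractf sum_distrib_left algebra_simps)
    finally show ?thesis .
  qed
  have eqd: "(norm (d \<omega>))\<^sup>2 = (\<gamma> n / real P)\<^sup>2 * (norm (Z \<omega>))\<^sup>2" for \<omega>
    unfolding dZ by (simp add: power_mult_distrib power2_abs power_divide)
  have id2: "integrable \<Omega> (\<lambda>\<omega>. (norm (d \<omega>))\<^sup>2)"
    unfolding eqd using iZ2 by simp
  have id: "integrable \<Omega> d" unfolding dZ[abs_def] using iZ by simp
  have ad: "integrable \<Omega> (\<lambda>\<omega>. a \<bullet> d \<omega>)" using id by simp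
  have up: "F (stp P K v n \<omega>) \<le> F v + a \<bullet> d \<omega> + L / 2 * (norm (d \<omega>))\<^sup>2" for \<omega>
    unfolding a_def d_def by (rule descent_upper[OF grad lip])
  have lo: "F (stp P K v n \<omega>) \<ge> F v + a \<bullet> d \<omega> - L / 2 * (norm (d \<omega>))\<^sup>2" for \<omega>
    unfolding a_def d_def by (rule descent_lower[OF grad lip])
  have ib: "integrable \<Omega> (\<lambda>\<omega>. \<bar>F v\<bar> + \<bar>a \<bullet> d \<omega>\<bar> + L / 2 * (norm (d \<omega>))\<^sup>2)"
    using ad id2 by auto
  show iF: "integrable \<Omega> (\<lambda>\<omega>. F (stp P K v n \<omega>))"
  proof (rule Bochner_Integration.integrable_bound[OF ib])
    show "(\<lambda>\<omega>. F (stp P K v n \<omega>)) \<in> borel_measurable \<Omega>" by measurable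
    show "AE \<omega> in \<Omega>. norm (F (stp P K v n \<omega>)) \<le> norm (\<bar>F v\<bar> + \<bar>a \<bullet> d \<omega>\<bar> + L / 2 * (norm (d \<omega>))\<^sup>2)"
    proof (rule AE_I2)
      fix \<omega>
      have "L / 2 * (norm (d \<omega>))\<^sup>2 \<ge> 0" using L_pos by simp
      then show "norm (F (stp P K v n \<omega>)) \<le> norm (\<bar>F v\<bar> + \<bar>a \<bullet> d \<omega>\<bar> + L / 2 * (norm (d \<omega>))\<^sup>2)"
        using up[of \<omega>] lo[of \<omega>] by (simp add: abs_le_iff) linarith
    qed
  qed
  have "(\<integral>\<omega>. F (stp P K v n \<omega>) \<partial>\<Omega>) \<le> (\<integral>\<omega>. F v + a \<bullet> d \<omega> + L / 2 * (norm (d \<omega>))\<^sup>2 \<partial>\<Omega>)"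
    by (rule integral_mono[OF iF _ up]) (use ad id2 in auto)
  also have "\<dots> = F v + (\<integral>\<omega>. a \<bullet> d \<omega> \<partial>\<Omega>) + L / 2 * (\<integral>\<omega>. (norm (d \<omega>))\<^sup>2 \<partial>\<Omega>)"
    using ad id2 by (simp add: Bochner_Integration.integral_add O.prob_space)
  also have "(\<integral>\<omega>. a \<bullet> d \<omega> \<partial>\<Omega>) = - (\<gamma> n / real P) * (\<Sum>j=1..P. (\<integral>\<omega>. a \<bullet> X j \<omega> \<partial>\<Omega>))"
    unfolding dZ Z_def using pr(1) by (simp add: inner_sum_right integral_sum)
  also have "(\<integral>\<omega>. (norm (d \<omega>))\<^sup>2 \<partial>\<Omega>) = (\<gamma> n / real P)\<^sup>2 * (\<integral>\<omega>. (norm (Z \<omega>))\<^sup>2 \<partial>\<Omega>)"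
    unfolding eqd by simp
  also have "F v + - (\<gamma> n / real P) * (\<Sum>j=1..P. (\<integral>\<omega>. a \<bullet> X j \<omega> \<partial>\<Omega>)) + L / 2 * ((\<gamma> n / real P)\<^sup>2 * (\<integral>\<omega>. (norm (Z \<omega>))\<^sup>2 \<partial>\<Omega>))
      \<le> F v + - (\<gamma> n / real P) * (\<Sum>j=1..P. (\<integral>\<omega>. a \<bullet> X j \<omega> \<partial>\<Omega>)) + L / 2 * ((\<gamma> n / real P)\<^sup>2 * (\<Sum>j=1..P. (\<integral>\<omega>. (norm (X j \<omega>))\<^sup>2 \<partial>\<Omega>) + (real P - 1) * (norm (\<mu> j))\<^sup>2))"
    using EZ2 L_pos by (intro add_left_mono mult_left_mono) auto
  also have "\<dots> = F v + (1 / real P) * (\<Sum>j=1..P. - \<gamma> n * (\<integral>\<omega>. a \<bullet> X j \<omega> \<partial>\<Omega>)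
       + L * (\<gamma> n)\<^sup>2 / (2 * real P) * ((\<integral>\<omega>. (norm (X j \<omega>))\<^sup>2 \<partial>\<Omega>) + (real P - 1) * (norm (\<mu> j))\<^sup>2))"
  proof -
    define A where "A j = (\<integral>\<omega>. a \<bullet> X j \<omega> \<partial>\<Omega>)" for j
    define Q where "Q j = (\<integral>\<omega>. (norm (X j \<omega>))\<^sup>2 \<partial>\<Omega>) + (real P - 1) * (norm (\<mu> j))\<^sup>2" for j
    define c where "c = L * (\<gamma> n)\<^sup>2 / (2 * real P)"
    have s: "(\<Sum>j=1..P. - \<gamma> n * A j + c * Q j) = - \<gamma> n * (\<Sum>j=1..P. A j) + c * (\<Sum>j=1..P. Q j)"
      by (simp only: sum.distrib sum_distrib_left[symmetric] mult_minus_left sum_negf)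
    have "F v + - (\<gamma> n / real P) * (\<Sum>j=1..P. A j) + L / 2 * ((\<gamma> n / real P)\<^sup>2 * (\<Sum>j=1..P. Q j))
        = F v + (1 / real P) * (\<Sum>j=1..P. - \<gamma> n * A j + c * Q j)"
      unfolding s unfolding c_def using P by (simp add: field_simps power2_eq_square)
    then show ?thesis unfolding A_def Q_def c_def .
  qed
  also have "\<dots> \<le> F v + (1 / real P) * (\<Sum>j=1..P. R)"
    using P by (intro add_left_mono mult_left_mono sum_mono pr(3)) auto
  also have "\<dots> = F v + R" using P by simp
  finally show "(\<integral>\<omega>. F (stp P K v n \<omega>) \<partial>\<Omega>) \<le> F v - \<gamma> n * (real K - 1 + \<delta>) / 2 * (norm (gradF v))\<^sup>2
        + L * (\<gamma> n)\<^sup>2 * (real K)\<^sup>2 * (M / real (B n)) / (2 * real P)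
        + L\<^sup>2 * (\<gamma> n)^3 * (M / real (B n)) * (real K - 1) * real K * (2 * real K - 1) / 12"
    by (simp add: R_def a_def)
qed

end

context kavg begin

interpretation O: prob_space \<Omega> by (rule prob_\<Omega>)

lemma seq_Suc_stp: "kavg_seq G P K \<gamma> B w1 \<omega> (Suc m) = stp P K (kavg_seq G P K \<gamma> B w1 \<omega> m) (Suc m) \<omega>"
  by (simp add: stp_def)

lemma dep_stp: "dep (- {i. fst i \<le> m}) (\<lambda>\<omega>. stp P K v (Suc m) \<omega>)"
  unfolding stp_def
  by (intro dep_comp[where h="\<lambda>x. (1 / real P) *\<^sub>R x"] dep_sum dep_mono[OF dep_locv]) (auto simp: Lset_def)

lemma mix_space: "\<omega> \<in> space \<Omega> \<Longrightarrow> \<omega>' \<in> space \<Omega> \<Longrightarrow> mix A \<omega> \<omega>' \<in> space \<Omega>"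
  by (auto simp: space_PiM_UNIV mix_def Pi_iff)

lemma outer_step:
  assumes b: "B (Suc m) \<ge> 1" and K: "K \<ge> 1" and P: "P \<ge> 1" and \<gamma>: "\<gamma> (Suc m) > 0"
    and step1: "1 \<ge> L\<^sup>2 * (\<gamma> (Suc m))\<^sup>2 * (real K + 1) * (real K - 2) / 2 + L * \<gamma> (Suc m) * real K"
    and step2: "1 - \<delta> \<ge> L\<^sup>2 * (\<gamma> (Suc m))\<^sup>2"
    and lowb: "\<And>\<omega> m. \<omega> \<in> space \<Omega> \<Longrightarrow> Fstar \<le> F (kavg_seq G P K \<gamma> B w1 \<omega> m)"
    and \<delta>: "\<delta> > 0"
  shows "(\<integral>\<^sup>+\<omega>. ennreal (F (kavg_seq G P K \<gamma> B w1 \<omega> (Suc m)) - Fstar) \<partial>\<Omega>)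
      + ennreal (\<gamma> (Suc m) * (real K - 1 + \<delta>) / 2) * (\<integral>\<^sup>+\<omega>. ennreal ((norm (gradF (kavg_seq G P K \<gamma> B w1 \<omega> m)))\<^sup>2) \<partial>\<Omega>)
    \<le> (\<integral>\<^sup>+\<omega>. ennreal (F (kavg_seq G P K \<gamma> B w1 \<omega> m) - Fstar) \<partial>\<Omega>)
      + ennreal (L * (\<gamma> (Suc m))\<^sup>2 * (real K)\<^sup>2 * (M / real (B (Suc m))) / (2 * real P)
        + L\<^sup>2 * (\<gamma> (Suc m))^3 * (M / real (B (Suc m))) * (real K - 1) * real K * (2 * real K - 1) / 12)"
proof -
  define sq where "sq \<omega> = kavg_seq G P K \<gamma> B w1 \<omega> m" for \<omega>
  define A where "A = {i :: sidx. fst i \<le> m}"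
  define c where "c = \<gamma> (Suc m) * (real K - 1 + \<delta>) / 2"
  define R where "R = L * (\<gamma> (Suc m))\<^sup>2 * (real K)\<^sup>2 * (M / real (B (Suc m))) / (2 * real P)
        + L\<^sup>2 * (\<gamma> (Suc m))^3 * (M / real (B (Suc m))) * (real K - 1) * real K * (2 * real K - 1) / 12"
  have "real K - 1 + \<delta> > 0" using K \<delta> by simp
  then have c0: "c \<ge> 0" using \<gamma> by (simp add: c_def)
  have R0: "R \<ge> 0"
  proof -
    have "real K - 1 \<ge> 0" "2 * real K - 1 \<ge> 0" using K by auto
    moreover have "M / real (B (Suc m)) \<ge> 0" using M_nonneg by simp
    ultimately show ?thesis unfolding R_def using L_pos \<gamma> M_nonneg by (intro add_nonneg_nonneg mult_nonneg_nonneg divide_nonneg_nonneg) auto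
  qed
  have dsq: "dep A sq" unfolding A_def sq_def[abs_def] by (rule dep_seq)
  have msq[measurable]: "sq \<in> borel_measurable \<Omega>" unfolding sq_def[abs_def] by (rule meas_seq)
  have ds: "dep (- A) (\<lambda>\<omega>. stp P K v (Suc m) \<omega>)" for v unfolding A_def by (rule dep_stp)
  have key: "stp P K (sq \<omega>) (Suc m) \<omega>' = kavg_seq G P K \<gamma> B w1 (mix A \<omega> \<omega>') (Suc m)" for \<omega> \<omega>'
  proof -
    have "kavg_seq G P K \<gamma> B w1 (mix A \<omega> \<omega>') (Suc m) = stp P K (sq (mix A \<omega> \<omega>')) (Suc m) (mix A \<omega> \<omega>')"
      unfolding sq_def by (rule seq_Suc_stp)
    also have "\<dots> = stp P K (sq \<omega>) (Suc m) (mix A \<omega> \<omega>')" by (simp add: dep_mix1[OF dsq])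
    also have "\<dots> = stp P K (sq \<omega>) (Suc m) \<omega>'" by (rule dep_mix2[OF ds])
    finally show ?thesis by simp
  qed
  have inner: "(\<integral>\<^sup>+\<omega>'. ennreal (F (stp P K (sq \<omega>) (Suc m) \<omega>') - Fstar) \<partial>\<Omega>) + ennreal (c * (norm (gradF (sq \<omega>)))\<^sup>2)
      \<le> ennreal (F (sq \<omega>) - Fstar) + ennreal R" if \<omega>: "\<omega> \<in> space \<Omega>" for \<omega>
  proof -
    note sb = step_bound[OF b K P \<gamma> step1 step2, of "sq \<omega>"]
    have nn: "F (stp P K (sq \<omega>) (Suc m) \<omega>') - Fstar \<ge> 0" if "\<omega>' \<in> space \<Omega>" for \<omega>'
      using lowb[OF mix_space[OF \<omega> that, of A], of "Suc m"] by (simp add: key)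
    have i: "integrable \<Omega> (\<lambda>\<omega>'. F (stp P K (sq \<omega>) (Suc m) \<omega>') - Fstar)" using sb(1) by simp
    have e: "(\<integral>\<^sup>+\<omega>'. ennreal (F (stp P K (sq \<omega>) (Suc m) \<omega>') - Fstar) \<partial>\<Omega>) = ennreal (\<integral>\<omega>'. F (stp P K (sq \<omega>) (Suc m) \<omega>') - Fstar \<partial>\<Omega>)"
      by (rule nn_integral_eq_integral[OF i]) (use nn in auto)
    have I: "(\<integral>\<omega>'. F (stp P K (sq \<omega>) (Suc m) \<omega>') - Fstar \<partial>\<Omega>) = (\<integral>\<omega>'. F (stp P K (sq \<omega>) (Suc m) \<omega>') \<partial>\<Omega>) - Fstar"
      using sb(1) by (simp add: Bochner_Integration.integral_diff O.prob_space)
    have I0: "(\<integral>\<omega>'. F (stp P K (sq \<omega>) (Suc m) \<omega>') - Fstar \<partial>\<Omega>) \<ge> 0"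
      by (rule integral_nonneg_AE) (use nn in auto)
    have I1: "(\<integral>\<omega>'. F (stp P K (sq \<omega>) (Suc m) \<omega>') - Fstar \<partial>\<Omega>) + c * (norm (gradF (sq \<omega>)))\<^sup>2 \<le> F (sq \<omega>) - Fstar + R"
      using sb(2) unfolding I c_def R_def by (simp add: algebra_simps)
    have "(\<integral>\<^sup>+\<omega>'. ennreal (F (stp P K (sq \<omega>) (Suc m) \<omega>') - Fstar) \<partial>\<Omega>) + ennreal (c * (norm (gradF (sq \<omega>)))\<^sup>2)
        = ennreal ((\<integral>\<omega>'. F (stp P K (sq \<omega>) (Suc m) \<omega>') - Fstar \<partial>\<Omega>) + c * (norm (gradF (sq \<omega>)))\<^sup>2)"
      unfolding e using I0 c0 by (simp add: ennreal_plus)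
    also have "\<dots> \<le> ennreal (F (sq \<omega>) - Fstar + R)" using I1 by (rule ennreal_leI)
    also have "\<dots> = ennreal (F (sq \<omega>) - Fstar) + ennreal R"
      using R0 lowb[OF \<omega>, of m] by (simp add: ennreal_plus sq_def)
    finally show ?thesis .
  qed
  define I where "I \<omega> = (\<integral>\<^sup>+\<omega>'. ennreal (F (stp P K (sq \<omega>) (Suc m) \<omega>') - Fstar) \<partial>\<Omega>)" for \<omega>
  have I2: "I \<omega> = (\<integral>\<^sup>+\<omega>'. ennreal (F (kavg_seq G P K \<gamma> B w1 (mix A \<omega> \<omega>') (Suc m)) - Fstar) \<partial>\<Omega>)" for \<omega>
    unfolding I_def by (simp add: key)
  have mS: "(\<lambda>\<omega>. kavg_seq G P K \<gamma> B w1 \<omega> (Suc m)) \<in> borel_measurable \<Omega>" by (rule meas_seq)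
  have mI: "I \<in> borel_measurable \<Omega>"
  proof -
    have "(\<lambda>p. kavg_seq G P K \<gamma> B w1 (case p of (\<omega>, \<omega>') \<Rightarrow> mix A \<omega> \<omega>') (Suc m)) \<in> borel_measurable (\<Omega> \<Otimes>\<^sub>M \<Omega>)"
      by (rule measurable_compose[OF measurable_mix mS])
    then have "(\<lambda>(\<omega>, \<omega>'). ennreal (F (kavg_seq G P K \<gamma> B w1 (mix A \<omega> \<omega>') (Suc m)) - Fstar)) \<in> borel_measurable (\<Omega> \<Otimes>\<^sub>M \<Omega>)"
      by (simp add: case_prod_beta')
    then have "(\<lambda>\<omega>. \<integral>\<^sup>+\<omega>'. ennreal (F (kavg_seq G P K \<gamma> B w1 (mix A \<omega> \<omega>') (Suc m)) - Fstar) \<partial>\<Omega>) \<in> borel_measurable \<Omega>"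
      by (rule O.borel_measurable_nn_integral)
    then show ?thesis unfolding I2[abs_def] .
  qed
  have eqS: "stp P K (sq \<omega>) (Suc m) \<omega> = kavg_seq G P K \<gamma> B w1 \<omega> (Suc m)" for \<omega>
    unfolding sq_def by (rule seq_Suc_stp[symmetric])
  have L1: "(\<integral>\<^sup>+\<omega>. ennreal (F (kavg_seq G P K \<gamma> B w1 \<omega> (Suc m)) - Fstar) \<partial>\<Omega>) = (\<integral>\<^sup>+\<omega>. I \<omega> \<partial>\<Omega>)"
  proof -
    have "(\<integral>\<^sup>+\<omega>. ennreal (F (stp P K (sq \<omega>) (Suc m) \<omega>) - Fstar) \<partial>\<Omega>) = (\<integral>\<^sup>+\<omega>. I \<omega> \<partial>\<Omega>)"
      unfolding I_def
    proof (rule cond_nn[where u=sq and \<psi>="\<lambda>v \<omega>. ennreal (F (stp P K v (Suc m) \<omega>) - Fstar)", OF _ dsq])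
      show "(\<lambda>\<omega>. ennreal (F (stp P K (sq \<omega>) (Suc m) \<omega>) - Fstar)) \<in> borel_measurable \<Omega>"
        unfolding eqS using mS by measurable
      show "dep (- A) (\<lambda>\<omega>. ennreal (F (stp P K v (Suc m) \<omega>) - Fstar))" for v
        by (rule dep_comp[OF ds])
    qed
    then show ?thesis by (simp add: eqS)
  qed
  have "(\<integral>\<^sup>+\<omega>. ennreal (F (kavg_seq G P K \<gamma> B w1 \<omega> (Suc m)) - Fstar) \<partial>\<Omega>)
      + ennreal c * (\<integral>\<^sup>+\<omega>. ennreal ((norm (gradF (sq \<omega>)))\<^sup>2) \<partial>\<Omega>)
      = (\<integral>\<^sup>+\<omega>. I \<omega> + ennreal (c * (norm (gradF (sq \<omega>)))\<^sup>2) \<partial>\<Omega>)"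
    unfolding L1 using mI c0 by (simp add: nn_integral_add nn_integral_cmult ennreal_mult)
  also have "\<dots> \<le> (\<integral>\<^sup>+\<omega>. ennreal (F (sq \<omega>) - Fstar) + ennreal R \<partial>\<Omega>)"
    by (rule nn_integral_mono) (use inner in \<open>simp add: I_def\<close>)
  also have "\<dots> = (\<integral>\<^sup>+\<omega>. ennreal (F (sq \<omega>) - Fstar) \<partial>\<Omega>) + ennreal R"
    by (simp add: nn_integral_add O.emeasure_space_1)
  finally show ?thesis unfolding sq_def c_def R_def .
qed

lemma telescope:
  assumes b: "\<And>n. n \<ge> 1 \<Longrightarrow> B n \<ge> 1" and K: "K \<ge> 1" and P: "P \<ge> 1" and \<gamma>: "\<And>n. n \<ge> 1 \<Longrightarrow> \<gamma> n > 0"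
    and step1: "\<And>n. n \<ge> 1 \<Longrightarrow> 1 \<ge> L\<^sup>2 * (\<gamma> n)\<^sup>2 * (real K + 1) * (real K - 2) / 2 + L * \<gamma> n * real K"
    and step2: "\<And>n. n \<ge> 1 \<Longrightarrow> 1 - \<delta> \<ge> L\<^sup>2 * (\<gamma> n)\<^sup>2"
    and lowb: "\<And>\<omega> m. \<omega> \<in> space \<Omega> \<Longrightarrow> Fstar \<le> F (kavg_seq G P K \<gamma> B w1 \<omega> m)"
    and \<delta>: "\<delta> > 0"
  shows "(\<integral>\<^sup>+\<omega>. ennreal (F (kavg_seq G P K \<gamma> B w1 \<omega> N) - Fstar) \<partial>\<Omega>)
     + (\<Sum>m<N. ennreal (\<gamma> (Suc m) * (real K - 1 + \<delta>) / 2) * (\<integral>\<^sup>+\<omega>. ennreal ((norm (gradF (kavg_seq G P K \<gamma> B w1 \<omega> m)))\<^sup>2) \<partial>\<Omega>))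
     \<le> ennreal (F w1 - Fstar) + (\<Sum>m<N. ennreal (L * (\<gamma> (Suc m))\<^sup>2 * (real K)\<^sup>2 * (M / real (B (Suc m))) / (2 * real P)
        + L\<^sup>2 * (\<gamma> (Suc m))^3 * (M / real (B (Suc m))) * (real K - 1) * real K * (2 * real K - 1) / 12))"
proof (induction N)
  case 0
  show ?case by (simp add: O.emeasure_space_1)
next
  case (Suc N)
  define A where "A N = (\<integral>\<^sup>+\<omega>. ennreal (F (kavg_seq G P K \<gamma> B w1 \<omega> N) - Fstar) \<partial>\<Omega>)" for N
  define CG where "CG m = ennreal (\<gamma> (Suc m) * (real K - 1 + \<delta>) / 2) * (\<integral>\<^sup>+\<omega>. ennreal ((norm (gradF (kavg_seq G P K \<gamma> B w1 \<omega> m)))\<^sup>2) \<partial>\<Omega>)" for m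
  define R where "R m = ennreal (L * (\<gamma> (Suc m))\<^sup>2 * (real K)\<^sup>2 * (M / real (B (Suc m))) / (2 * real P)
        + L\<^sup>2 * (\<gamma> (Suc m))^3 * (M / real (B (Suc m))) * (real K - 1) * real K * (2 * real K - 1) / 12)" for m
  have os: "A (Suc N) + CG N \<le> A N + R N"
    unfolding A_def CG_def R_def
    by (rule outer_step[OF b K P \<gamma> step1 step2 lowb \<delta>]) auto
  have IH: "A N + (\<Sum>m<N. CG m) \<le> ennreal (F w1 - Fstar) + (\<Sum>m<N. R m)"
    using Suc unfolding A_def CG_def R_def .
  have "A (Suc N) + (\<Sum>m<Suc N. CG m) = (A (Suc N) + CG N) + (\<Sum>m<N. CG m)"
    by (simp add: ac_simps)
  also have "\<dots> \<le> (A N + R N) + (\<Sum>m<N. CG m)" using os by (rule add_right_mono)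
  also have "\<dots> = (A N + (\<Sum>m<N. CG m)) + R N" by (simp add: ac_simps)
  also have "\<dots> \<le> (ennreal (F w1 - Fstar) + (\<Sum>m<N. R m)) + R N" using IH by (rule add_right_mono)
  also have "\<dots> = ennreal (F w1 - Fstar) + (\<Sum>m<Suc N. R m)" by (simp add: ac_simps)
  finally show ?case unfolding A_def CG_def R_def .
qed

end

lemma term_identity0:
  fixes L g M e S :: real and b K P :: nat
  assumes "b \<ge> 1" "P \<ge> 1" "e > 0" "S > 0"
  shows "2 / (e * S) * (L * g\<^sup>2 * (real K)\<^sup>2 * (M / real b) / (2 * real P)
        + L\<^sup>2 * g^3 * (M / real b) * (real K - 1) * real K * (2 * real K - 1) / 12)
     = L * real K * g\<^sup>2 * M / (real b * e * S) * (real K / real P + L * (2 * real K - 1) * (real K - 1) * g / 6)"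
  using assms by (simp add: field_simps power2_eq_square power3_eq_cube)

lemma term_identity:
  fixes L g M d S :: real and b K P :: nat
  assumes "b \<ge> 1" "P \<ge> 1" "real K - 1 + d > 0" "S > 0"
  shows "2 / ((real K - 1 + d) * S) * (L * g\<^sup>2 * (real K)\<^sup>2 * (M / real b) / (2 * real P)
        + L\<^sup>2 * g^3 * (M / real b) * (real K - 1) * real K * (2 * real K - 1) / 12)
     = L * real K * g\<^sup>2 * M / (real b * (real K - 1 + d) * S) * (real K / real P + L * (2 * real K - 1) * (real K - 1) * g / 6)"
  by (rule term_identity0[OF assms])

lemma kappa_identity:
  fixes g e S :: real
  assumes "e > 0" "S > 0"
  shows "g / S = 2 / (e * S) * (g * e / 2)"
  using assms by (simp add: field_simps)

context kavg begin

interpretation O: prob_space \<Omega> by (rule prob_\<Omega>)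

lemma main_bound:
  assumes b: "\<And>n. n \<ge> 1 \<Longrightarrow> B n \<ge> 1" and K: "K \<ge> 1" and P: "P \<ge> 1" and \<gamma>: "\<And>n. n \<ge> 1 \<Longrightarrow> \<gamma> n > 0"
    and step1: "\<And>n. n \<ge> 1 \<Longrightarrow> 1 \<ge> L\<^sup>2 * (\<gamma> n)\<^sup>2 * (real K + 1) * (real K - 2) / 2 + L * \<gamma> n * real K"
    and step2: "\<And>n. n \<ge> 1 \<Longrightarrow> 1 - \<delta> \<ge> L\<^sup>2 * (\<gamma> n)\<^sup>2"
    and lowb: "\<And>\<omega> m. \<omega> \<in> space \<Omega> \<Longrightarrow> Fstar \<le> F (kavg_seq G P K \<gamma> B w1 \<omega> m)"
    and \<delta>: "\<delta> > 0"
  shows "(\<integral>\<^sup>+ \<omega>. ennreal (\<Sum>j=1..N. \<gamma> j / (\<Sum>i=1..N. \<gamma> i) * (norm (gradF (kavg_w G P K \<gamma> B w1 \<omega> j)))\<^sup>2) \<partial>\<Omega>)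
           \<le> ennreal (2 * (F w1 - Fstar) / ((real K - 1 + \<delta>) * (\<Sum>i=1..N. \<gamma> i))
               + (\<Sum>j=1..N. L * real K * (\<gamma> j)\<^sup>2 * M
                     / (real (B j) * (real K - 1 + \<delta>) * (\<Sum>i=1..N. \<gamma> i))
                     * (real K / real P + L * (2 * real K - 1) * (real K - 1) * \<gamma> j / 6)))"
proof (cases "N = 0")
  case True then show ?thesis by simp
next
  case False
  define S where "S = (\<Sum>i=1..N. \<gamma> i)"
  have Kd: "real K - 1 + \<delta> > 0" using K \<delta> by simp
  have S: "S > 0" unfolding S_def using False \<gamma> by (intro sum_pos) auto
  define \<kappa> where "\<kappa> = 2 / ((real K - 1 + \<delta>) * S)"
  have \<kappa>: "\<kappa> > 0" unfolding \<kappa>_def using Kd S by simp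
  define c where "c j = \<gamma> j * (real K - 1 + \<delta>) / 2" for j
  have c0: "c j \<ge> 0" if "j \<ge> 1" for j unfolding c_def using \<gamma>[OF that] Kd by simp
  define Gr where "Gr j = (\<integral>\<^sup>+\<omega>. ennreal ((norm (gradF (kavg_w G P K \<gamma> B w1 \<omega> j)))\<^sup>2) \<partial>\<Omega>)" for j
  define R where "R m = L * (\<gamma> (Suc m))\<^sup>2 * (real K)\<^sup>2 * (M / real (B (Suc m))) / (2 * real P)
        + L\<^sup>2 * (\<gamma> (Suc m))^3 * (M / real (B (Suc m))) * (real K - 1) * real K * (2 * real K - 1) / 12" for m
  have R0: "R m \<ge> 0" for m
  proof -
    have "real K - 1 \<ge> 0" "2 * real K - 1 \<ge> 0" using K by auto
    moreover have "M / real (B (Suc m)) \<ge> 0" using M_nonneg by simp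
    ultimately show ?thesis unfolding R_def using L_pos \<gamma>[of "Suc m"] M_nonneg
      by (intro add_nonneg_nonneg mult_nonneg_nonneg divide_nonneg_nonneg) auto
  qed
  have D0: "F w1 - Fstar \<ge> 0"
  proof -
    obtain \<omega> where "\<omega> \<in> space \<Omega>" using O.not_empty by blast
    then show ?thesis using lowb[of \<omega> 0] by simp
  qed
  have mw: "(\<lambda>\<omega>. kavg_w G P K \<gamma> B w1 \<omega> j) \<in> borel_measurable \<Omega>" for j
    unfolding kavg_w_def by (rule meas_seq)
  have pt: "ennreal (\<Sum>j=1..N. \<gamma> j / S * (norm (gradF (kavg_w G P K \<gamma> B w1 \<omega> j)))\<^sup>2)
      = (\<Sum>j=1..N. ennreal \<kappa> * (ennreal (c j) * ennreal ((norm (gradF (kavg_w G P K \<gamma> B w1 \<omega> j)))\<^sup>2)))" for \<omega>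
  proof -
    have "ennreal \<kappa> * (ennreal (c j) * ennreal ((norm (gradF (kavg_w G P K \<gamma> B w1 \<omega> j)))\<^sup>2))
        = ennreal (\<gamma> j / S * (norm (gradF (kavg_w G P K \<gamma> B w1 \<omega> j)))\<^sup>2)" if j: "j \<in> {1..N}" for j
    proof -
      have "\<gamma> j / S = \<kappa> * c j" unfolding \<kappa>_def c_def by (rule kappa_identity[OF Kd S])
      then show ?thesis using \<kappa> c0[of j] j by (simp add: ennreal_mult[symmetric] mult.assoc)
    qed
    moreover have "ennreal (\<Sum>j=1..N. \<gamma> j / S * (norm (gradF (kavg_w G P K \<gamma> B w1 \<omega> j)))\<^sup>2)
        = (\<Sum>j=1..N. ennreal (\<gamma> j / S * (norm (gradF (kavg_w G P K \<gamma> B w1 \<omega> j)))\<^sup>2))"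
    proof (rule sum_ennreal[symmetric])
      fix j assume j: "j \<in> {1..N}"
      have "\<gamma> j \<ge> 0" using \<gamma>[of j] j by simp
      then show "0 \<le> \<gamma> j / S * (norm (gradF (kavg_w G P K \<gamma> B w1 \<omega> j)))\<^sup>2"
        using S by (intro mult_nonneg_nonneg divide_nonneg_nonneg) auto
    qed
    ultimately show ?thesis by simp
  qed
  have "(\<integral>\<^sup>+ \<omega>. ennreal (\<Sum>j=1..N. \<gamma> j / S * (norm (gradF (kavg_w G P K \<gamma> B w1 \<omega> j)))\<^sup>2) \<partial>\<Omega>)
      = (\<Sum>j=1..N. ennreal \<kappa> * (ennreal (c j) * Gr j))"
    unfolding pt Gr_def using mw by (simp add: nn_integral_sum nn_integral_cmult)
  also have "\<dots> = ennreal \<kappa> * (\<Sum>m<N. ennreal (c (Suc m)) * (\<integral>\<^sup>+\<omega>. ennreal ((norm (gradF (kavg_seq G P K \<gamma> B w1 \<omega> m)))\<^sup>2) \<partial>\<Omega>))"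
    by (simp add: sum_distrib_left sum.atLeast1_atMost_eq Gr_def kavg_w_def)
  also have "\<dots> \<le> ennreal \<kappa> * (ennreal (F w1 - Fstar) + (\<Sum>m<N. ennreal (R m)))"
  proof (rule mult_left_mono)
    define X where "X = (\<Sum>m<N. ennreal (c (Suc m)) * (\<integral>\<^sup>+\<omega>. ennreal ((norm (gradF (kavg_seq G P K \<gamma> B w1 \<omega> m)))\<^sup>2) \<partial>\<Omega>))"
    define A where "A = (\<integral>\<^sup>+\<omega>. ennreal (F (kavg_seq G P K \<gamma> B w1 \<omega> N) - Fstar) \<partial>\<Omega>)"
    have tel: "A + X \<le> ennreal (F w1 - Fstar) + (\<Sum>m<N. ennreal (R m))"
      unfolding A_def X_def c_def R_def
      by (rule telescope) (use b K P \<gamma> step1 step2 lowb \<delta> in auto)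
    have "X \<le> A + X" by (rule add_increasing[OF zero_le order_refl])
    then show "X \<le> ennreal (F w1 - Fstar) + (\<Sum>m<N. ennreal (R m))" using tel by (rule order_trans)
  qed simp
  also have "\<dots> = ennreal (\<kappa> * (F w1 - Fstar) + (\<Sum>m<N. \<kappa> * R m))"
  proof -
    have "(\<Sum>m<N. ennreal (R m)) = ennreal (\<Sum>m<N. R m)" using R0 by (rule sum_ennreal)
    then have "ennreal (F w1 - Fstar) + (\<Sum>m<N. ennreal (R m)) = ennreal (F w1 - Fstar + (\<Sum>m<N. R m))"
      using D0 R0 by (simp add: ennreal_plus sum_nonneg)
    moreover have "ennreal \<kappa> * ennreal (F w1 - Fstar + (\<Sum>m<N. R m)) = ennreal (\<kappa> * (F w1 - Fstar + (\<Sum>m<N. R m)))"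
      by (rule ennreal_mult[symmetric]) (use \<kappa> D0 R0 in \<open>auto intro!: add_nonneg_nonneg sum_nonneg\<close>)
    ultimately have "ennreal \<kappa> * (ennreal (F w1 - Fstar) + (\<Sum>m<N. ennreal (R m))) = ennreal (\<kappa> * (F w1 - Fstar + (\<Sum>m<N. R m)))"
      by simp
    also have "\<kappa> * (F w1 - Fstar + (\<Sum>m<N. R m)) = \<kappa> * (F w1 - Fstar) + (\<Sum>m<N. \<kappa> * R m)"
      by (simp add: distrib_left sum_distrib_left)
    finally show ?thesis .
  qed
  also have "\<kappa> * (F w1 - Fstar) + (\<Sum>m<N. \<kappa> * R m) = 2 * (F w1 - Fstar) / ((real K - 1 + \<delta>) * S)
      + (\<Sum>j=1..N. L * real K * (\<gamma> j)\<^sup>2 * M / (real (B j) * (real K - 1 + \<delta>) * S)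
          * (real K / real P + L * (2 * real K - 1) * (real K - 1) * \<gamma> j / 6))"
  proof -
    have "(\<Sum>m<N. \<kappa> * R m) = (\<Sum>j=1..N. L * real K * (\<gamma> j)\<^sup>2 * M / (real (B j) * (real K - 1 + \<delta>) * S)
          * (real K / real P + L * (2 * real K - 1) * (real K - 1) * \<gamma> j / 6))"
    proof -
      have "(\<Sum>m<N. \<kappa> * R m) = (\<Sum>m<N. L * real K * (\<gamma> (Suc m))\<^sup>2 * M / (real (B (Suc m)) * (real K - 1 + \<delta>) * S)
          * (real K / real P + L * (2 * real K - 1) * (real K - 1) * \<gamma> (Suc m) / 6))"
        by (intro sum.cong refl) (unfold \<kappa>_def R_def, rule term_identity, use b P Kd S in auto)
      also have "\<dots> = (\<Sum>j=1..N. L * real K * (\<gamma> j)\<^sup>2 * M / (real (B j) * (real K - 1 + \<delta>) * S)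
          * (real K / real P + L * (2 * real K - 1) * (real K - 1) * \<gamma> j / 6))"
        by (simp add: sum.atLeast1_atMost_eq)
      finally show ?thesis .
    qed
    then show ?thesis by (simp add: \<kappa>_def)
  qed
  finally show ?thesis unfolding S_def .
qed

end

lemma limit_real:
  fixes \<gamma> :: "nat \<Rightarrow> real" and B :: "nat \<Rightarrow> nat" and L M \<delta> D0 :: real and K P :: nat
  assumes \<gamma>: "\<And>j. j \<ge> 1 \<Longrightarrow> \<gamma> j > 0" and b: "\<And>j. j \<ge> 1 \<Longrightarrow> B j \<ge> 1"
    and K: "K \<ge> 1" and P: "P \<ge> 1" and L: "L > 0" and M: "M \<ge> 0" and \<delta>: "\<delta> > 0" and D0: "D0 \<ge> 0"
    and div: "filterlim (\<lambda>N. \<Sum>j=1..N. \<gamma> j) at_top sequentially"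
    and s1: "summable (\<lambda>j. real K * (\<gamma> (Suc j))\<^sup>2 / (real P * real (B (Suc j))))"
    and s2: "summable (\<lambda>j. (\<gamma> (Suc j)) ^ 3)"
  shows "(\<lambda>N. 2 * D0 / ((real K - 1 + \<delta>) * (\<Sum>i=1..N. \<gamma> i))
       + (\<Sum>j=1..N. L * real K * (\<gamma> j)\<^sup>2 * M / (real (B j) * (real K - 1 + \<delta>) * (\<Sum>i=1..N. \<gamma> i))
           * (real K / real P + L * (2 * real K - 1) * (real K - 1) * \<gamma> j / 6))) \<longlonglongrightarrow> 0"
proof -
  define e where "e = real K - 1 + \<delta>"
  have e: "e > 0" using K \<delta> by (simp add: e_def)
  define S where "S N = (\<Sum>i=1..N. \<gamma> i)" for N
  have S0: "S N \<ge> 0" for N unfolding S_def using \<gamma> by (intro sum_nonneg) (auto intro: less_imp_le)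
  define T where "T j = L * real K * (\<gamma> j)\<^sup>2 * M / (real (B j) * e) * (real K / real P + L * (2 * real K - 1) * (real K - 1) * \<gamma> j / 6)" for j
  define u1 where "u1 j = real K * (\<gamma> j)\<^sup>2 / (real P * real (B j))" for j
  define C1 where "C1 = L * M * real K / e"
  define C2 where "C2 = L\<^sup>2 * M * real K * (2 * real K - 1) * (real K - 1) / (6 * e)"
  have C1: "C1 \<ge> 0" unfolding C1_def using L M e by simp
  have C2: "C2 \<ge> 0" unfolding C2_def using L M e K by (intro divide_nonneg_nonneg mult_nonneg_nonneg) auto
  have T0: "T j \<ge> 0" if "j \<ge> 1" for j
  proof -
    have "real K - 1 \<ge> 0" "2 * real K - 1 \<ge> 0" using K by auto
    then show ?thesis unfolding T_def using L M e \<gamma>[OF that] b[OF that] P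
      by (intro mult_nonneg_nonneg divide_nonneg_nonneg add_nonneg_nonneg) auto
  qed
  have Tle: "T j \<le> C1 * u1 j + C2 * (\<gamma> j)^3" if j: "j \<ge> 1" for j
  proof -
    have bj: "real (B j) \<ge> 1" using b[OF j] by simp
    have g: "\<gamma> j > 0" using \<gamma>[OF j] .
    have "T j = C1 * u1 j + C2 * ((\<gamma> j)^3 / real (B j))"
      unfolding T_def C1_def C2_def u1_def using e bj P by (simp add: field_simps power2_eq_square power3_eq_cube)
    also have "(\<gamma> j)^3 / real (B j) \<le> (\<gamma> j)^3"
      using bj g by (simp add: divide_le_eq)
    then have "C1 * u1 j + C2 * ((\<gamma> j)^3 / real (B j)) \<le> C1 * u1 j + C2 * (\<gamma> j)^3"
      using C2 by (intro add_left_mono mult_left_mono) auto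
    finally show ?thesis .
  qed
  define Cb where "Cb = C1 * (\<Sum>m. u1 (Suc m)) + C2 * (\<Sum>m. (\<gamma> (Suc m))^3)"
  have sumT: "(\<Sum>j=1..N. T j) \<le> Cb" for N
  proof -
    have "(\<Sum>j=1..N. T j) \<le> (\<Sum>j=1..N. C1 * u1 j + C2 * (\<gamma> j)^3)" by (intro sum_mono Tle) auto
    also have "\<dots> = C1 * (\<Sum>m<N. u1 (Suc m)) + C2 * (\<Sum>m<N. (\<gamma> (Suc m))^3)"
      by (simp add: sum.distrib sum_distrib_left sum.atLeast1_atMost_eq)
    also have "\<dots> \<le> Cb" unfolding Cb_def
    proof (intro add_mono mult_left_mono C1 C2 sum_le_suminf)
      show "summable (\<lambda>m. u1 (Suc m))" using s1 unfolding u1_def .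
      show "summable (\<lambda>m. (\<gamma> (Suc m))^3)" using s2 .
      show "0 \<le> u1 (Suc m)" for m unfolding u1_def using \<gamma>[of "Suc m"] by simp
      show "0 \<le> (\<gamma> (Suc m))^3" for m using \<gamma>[of "Suc m"] by simp
    qed auto
    finally show ?thesis .
  qed
  have sumT0: "(\<Sum>j=1..N. T j) \<ge> 0" for N by (intro sum_nonneg T0) auto
  have req: "2 * D0 / ((real K - 1 + \<delta>) * S N)
       + (\<Sum>j=1..N. L * real K * (\<gamma> j)\<^sup>2 * M / (real (B j) * (real K - 1 + \<delta>) * S N)
           * (real K / real P + L * (2 * real K - 1) * (real K - 1) * \<gamma> j / 6))
      = (2 * D0 / e + (\<Sum>j=1..N. T j)) * inverse (S N)" for N
  proof -
    have t: "x / (y * S N) * Y = x / y * Y * inverse (S N)" for x y Y :: real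
      by (simp add: divide_inverse inverse_mult_distrib mult_ac)
    have t2: "x / (y * S N) = x / y * inverse (S N)" for x y :: real
      by (simp add: divide_inverse inverse_mult_distrib mult_ac)
    show ?thesis unfolding T_def e_def t unfolding t2 by (simp only: sum_distrib_right distrib_right)
  qed
  have lim0: "(\<lambda>N. (2 * D0 / e + Cb) * inverse (S N)) \<longlonglongrightarrow> 0"
    using tendsto_mult_right_zero[OF tendsto_inverse_0_at_top[OF div[folded S_def[abs_def]]]] by simp
  show ?thesis unfolding S_def[symmetric] req
  proof (rule tendsto_sandwich[OF _ _ tendsto_const lim0])
    show "\<forall>\<^sub>F N in sequentially. 0 \<le> (2 * D0 / e + (\<Sum>j=1..N. T j)) * inverse (S N)"
      using D0 e sumT0 S0 by (intro always_eventually allI mult_nonneg_nonneg add_nonneg_nonneg) auto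
    show "\<forall>\<^sub>F N in sequentially. (2 * D0 / e + (\<Sum>j=1..N. T j)) * inverse (S N) \<le> (2 * D0 / e + Cb) * inverse (S N)"
      using sumT S0 by (intro always_eventually allI mult_right_mono add_left_mono) auto
  qed
qed

theorem theorem2:
  fixes F :: "'a::euclidean_space \<Rightarrow> real"
    and gradF :: "'a \<Rightarrow> 'a"
    and L M Fstar \<delta> :: real
    and D :: "'x measure"
    and G :: "'a \<Rightarrow> 'x \<Rightarrow> 'a"
    and P K :: nat
    and \<gamma> :: "nat \<Rightarrow> real"
    and B :: "nat \<Rightarrow> nat"
    and w1 :: 'a
  defines "\<Omega> \<equiv> PiM (UNIV :: sidx set) (\<lambda>_. D)"
    and "wt \<equiv> \<lambda>\<omega> n. kavg_w G P K \<gamma> B w1 \<omega> n"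
  assumes grad: "\<And>w. GDERIV F w :> gradF w"
    and L_pos: "L > 0"
    and lip: "\<And>w w'. norm (gradF w - gradF w') \<le> L * norm (w - w')"
    and D_prob: "prob_space D"
    and G_meas: "(\<lambda>(w, x). G w x) \<in> borel_measurable (borel \<Otimes>\<^sub>M D)"
    and G_int: "\<And>w. integrable D (G w)"
    and G_int2: "\<And>w. integrable D (\<lambda>x. (norm (G w x))\<^sup>2)"
    and unbiased: "\<And>w. (\<integral>x. G w x \<partial>D) = gradF w"
    and variance: "\<And>w. (\<integral>x. (norm (G w x))\<^sup>2 \<partial>D) - (norm (\<integral>x. G w x \<partial>D))\<^sup>2 \<le> M"
    and M_nonneg: "M \<ge> 0"
    and P_pos: "P \<ge> 1"
    and K_pos: "K \<ge> 1"
    and \<gamma>_pos: "\<And>j. j \<ge> 1 \<Longrightarrow> \<gamma> j > 0"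
    and B_pos: "\<And>j. j \<ge> 1 \<Longrightarrow> B j \<ge> 1"
    and lower: "\<exists>U. open U
        \<and> (\<forall>\<omega>\<in>space \<Omega>. \<forall>n\<ge>1. \<forall>j\<in>{1..P}. \<forall>k\<le>K.
              kavg_local G \<gamma> B \<omega> n j (wt \<omega> n) k \<in> U)
        \<and> (\<forall>\<omega>\<in>space \<Omega>. \<forall>n\<ge>1. wt \<omega> n \<in> U)
        \<and> (\<forall>w\<in>U. Fstar \<le> F w)"
    and \<delta>_bounds: "0 < \<delta>" "\<delta> < 1"
    and step1: "\<And>j. j \<ge> 1 \<Longrightarrow>
        1 \<ge> L\<^sup>2 * (\<gamma> j)\<^sup>2 * (real K + 1) * (real K - 2) / 2 + L * \<gamma> j * real K"
    and step2: "\<And>j. j \<ge> 1 \<Longrightarrow> 1 - \<delta> \<ge> L\<^sup>2 * (\<gamma> j)\<^sup>2"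
  shows "(\<forall>N::nat.
           (\<integral>\<^sup>+ \<omega>. ennreal (\<Sum>j=1..N. \<gamma> j / (\<Sum>i=1..N. \<gamma> i) * (norm (gradF (wt \<omega> j)))\<^sup>2) \<partial>\<Omega>)
           \<le> ennreal (2 * (F w1 - Fstar) / ((real K - 1 + \<delta>) * (\<Sum>i=1..N. \<gamma> i))
               + (\<Sum>j=1..N. L * real K * (\<gamma> j)\<^sup>2 * M
                     / (real (B j) * (real K - 1 + \<delta>) * (\<Sum>i=1..N. \<gamma> i))
                     * (real K / real P + L * (2 * real K - 1) * (real K - 1) * \<gamma> j / 6))))
     \<and> ((filterlim (\<lambda>N. \<Sum>j=1..N. \<gamma> j) at_top sequentially
          \<and> summable (\<lambda>j. real K * (\<gamma> (Suc j))\<^sup>2 / (real P * real (B (Suc j))))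
          \<and> summable (\<lambda>j. (\<gamma> (Suc j)) ^ 3))
        \<longrightarrow> ((\<lambda>N. \<integral>\<^sup>+ \<omega>. ennreal (\<Sum>j=1..N. \<gamma> j / (\<Sum>i=1..N. \<gamma> i) * (norm (gradF (wt \<omega> j)))\<^sup>2) \<partial>\<Omega>)
              \<longlonglongrightarrow> 0))"
proof -
  interpret KA: kavg D F gradF L M G \<gamma> B
    by (intro kavg.intro omsp.intro kavg_axioms.intro D_prob grad L_pos lip G_meas G_int G_int2 unbiased variance M_nonneg)
  have lowb: "Fstar \<le> F (kavg_seq G P K \<gamma> B w1 \<omega> m)" if "\<omega> \<in> space (PiM UNIV (\<lambda>_. D))" for \<omega> m
  proof -
    from lower obtain U where U: "\<forall>\<omega>\<in>space \<Omega>. \<forall>n\<ge>1. wt \<omega> n \<in> U" "\<forall>w\<in>U. Fstar \<le> F w" by blast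
    have "wt \<omega> (Suc m) \<in> U" using U(1) that unfolding \<Omega>_def by auto
    then show ?thesis using U(2) unfolding wt_def kavg_w_def by auto
  qed
  have bnd: "(\<integral>\<^sup>+ \<omega>. ennreal (\<Sum>j=1..N. \<gamma> j / (\<Sum>i=1..N. \<gamma> i) * (norm (gradF (wt \<omega> j)))\<^sup>2) \<partial>\<Omega>)
           \<le> ennreal (2 * (F w1 - Fstar) / ((real K - 1 + \<delta>) * (\<Sum>i=1..N. \<gamma> i))
               + (\<Sum>j=1..N. L * real K * (\<gamma> j)\<^sup>2 * M
                     / (real (B j) * (real K - 1 + \<delta>) * (\<Sum>i=1..N. \<gamma> i))
                     * (real K / real P + L * (2 * real K - 1) * (real K - 1) * \<gamma> j / 6)))" for N
    unfolding \<Omega>_def wt_def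
    by (rule KA.main_bound[OF B_pos K_pos P_pos \<gamma>_pos step1 step2 lowb \<delta>_bounds(1)])
  have D0: "F w1 - Fstar \<ge> 0"
  proof -
    interpret O: prob_space "PiM UNIV (\<lambda>_::sidx. D)" by (rule KA.prob_\<Omega>)
    obtain \<omega> where "\<omega> \<in> space (PiM UNIV (\<lambda>_::sidx. D))" using O.not_empty by blast
    then show ?thesis using lowb[of \<omega> 0] by simp
  qed
  show ?thesis
  proof (intro conjI allI impI)
    show "\<And>N. (\<integral>\<^sup>+ \<omega>. ennreal (\<Sum>j=1..N. \<gamma> j / (\<Sum>i=1..N. \<gamma> i) * (norm (gradF (wt \<omega> j)))\<^sup>2) \<partial>\<Omega>)
           \<le> ennreal (2 * (F w1 - Fstar) / ((real K - 1 + \<delta>) * (\<Sum>i=1..N. \<gamma> i))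
               + (\<Sum>j=1..N. L * real K * (\<gamma> j)\<^sup>2 * M
                     / (real (B j) * (real K - 1 + \<delta>) * (\<Sum>i=1..N. \<gamma> i))
                     * (real K / real P + L * (2 * real K - 1) * (real K - 1) * \<gamma> j / 6)))"
      by (rule bnd)
    assume H: "filterlim (\<lambda>N. \<Sum>j=1..N. \<gamma> j) at_top sequentially
          \<and> summable (\<lambda>j. real K * (\<gamma> (Suc j))\<^sup>2 / (real P * real (B (Suc j))))
          \<and> summable (\<lambda>j. (\<gamma> (Suc j)) ^ 3)"
    define r where "r N = 2 * (F w1 - Fstar) / ((real K - 1 + \<delta>) * (\<Sum>i=1..N. \<gamma> i))
               + (\<Sum>j=1..N. L * real K * (\<gamma> j)\<^sup>2 * M
                     / (real (B j) * (real K - 1 + \<delta>) * (\<Sum>i=1..N. \<gamma> i))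
                     * (real K / real P + L * (2 * real K - 1) * (real K - 1) * \<gamma> j / 6))" for N
    have lim: "r \<longlonglongrightarrow> 0" unfolding r_def
      by (rule limit_real[OF \<gamma>_pos B_pos K_pos P_pos L_pos M_nonneg \<delta>_bounds(1) D0]) (use H in auto)
    have lim2: "(\<lambda>N. ennreal (r N)) \<longlonglongrightarrow> 0"
      using tendsto_ennrealI[OF lim] by simp
    show "(\<lambda>N. \<integral>\<^sup>+ \<omega>. ennreal (\<Sum>j=1..N. \<gamma> j / (\<Sum>i=1..N. \<gamma> i) * (norm (gradF (wt \<omega> j)))\<^sup>2) \<partial>\<Omega>)
              \<longlonglongrightarrow> 0"
    proof (rule tendsto_sandwich[OF _ _ tendsto_const lim2])
      show "\<forall>\<^sub>F N in sequentially. 0 \<le> (\<integral>\<^sup>+ \<omega>. ennreal (\<Sum>j=1..N. \<gamma> j / (\<Sum>i=1..N. \<gamma> i) * (norm (gradF (wt \<omega> j)))\<^sup>2) \<partial>\<Omega>)"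
        by simp
      show "\<forall>\<^sub>F N in sequentially. (\<integral>\<^sup>+ \<omega>. ennreal (\<Sum>j=1..N. \<gamma> j / (\<Sum>i=1..N. \<gamma> i) * (norm (gradF (wt \<omega> j)))\<^sup>2) \<partial>\<Omega>) \<le> ennreal (r N)"
        unfolding r_def by (intro always_eventually allI bnd)
    qed
  qed
qed

end
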